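(* Let $n\ge 2$ be an integer. Every generalized ladder having at least $4608n^5$ vertices has a vertex-minor isomorphic to a cycle of length $4n+3$.
   Context: All graphs are finite, simple and undirected. A generalized ladder is a graph $G$ together with two vertex-disjoint paths $P=p_1p_2\dots p_a$ and $Q=q_1q_2\dots q_b$ ($a,b\ge 1$) such that $V(G)=V(P)\cup V(Q)$, every edge of $G$ not in $P$ or $Q$ (a chord) joins a vertex of $P$ to a vertex of $Q$, $p_1$ is adjacent to $q_1$, $p_a$ is adjacent to $q_b$, and no two chords cross, where chords $p_iq_j$ and $p_{i'}q_{j'}$ with $i<i'$ cross iff $j>j'$. For a vertex $v$, the local complementation $G*v$ replaces the subgraph induced on the neighborhood of $v$ by its complement. $H$ is a vertex-minor of $G$ if $H$ is an induced subgraph of a graph obtained from $G$ by a sequence of local complementations. *)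

theory Defs
  imports Main
begin

definition graph :: "'a set \<Rightarrow> ('a \<Rightarrow> 'a \<Rightarrow> bool) \<Rightarrow> bool" where
  "graph V E \<longleftrightarrow> finite V \<and> (\<forall>x y. E x y \<longrightarrow> x \<in> V \<and> y \<in> V \<and> x \<noteq> y) \<and> (\<forall>x y. E x y \<longrightarrow> E y x)"

definition local_comp :: "('a \<Rightarrow> 'a \<Rightarrow> bool) \<Rightarrow> 'a \<Rightarrow> ('a \<Rightarrow> 'a \<Rightarrow> bool)" where
  "local_comp E v = (\<lambda>x y. if E v x \<and> E v y \<and> x \<noteq> y then \<not> E x y else E x y)"

inductive lc_reach :: "'a set \<Rightarrow> ('a \<Rightarrow> 'a \<Rightarrow> bool) \<Rightarrow> ('a \<Rightarrow> 'a \<Rightarrow> bool) \<Rightarrow> bool"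
  for V E where
  refl: "lc_reach V E E"
| step: "lc_reach V E E' \<Longrightarrow> v \<in> V \<Longrightarrow> lc_reach V E (local_comp E' v)"

definition induced :: "('a \<Rightarrow> 'a \<Rightarrow> bool) \<Rightarrow> 'a set \<Rightarrow> ('a \<Rightarrow> 'a \<Rightarrow> bool)" where
  "induced E U = (\<lambda>x y. x \<in> U \<and> y \<in> U \<and> E x y)"

definition graph_iso :: "'a set \<Rightarrow> ('a \<Rightarrow> 'a \<Rightarrow> bool) \<Rightarrow> 'b set \<Rightarrow> ('b \<Rightarrow> 'b \<Rightarrow> bool) \<Rightarrow> bool" where
  "graph_iso V1 E1 V2 E2 \<longleftrightarrow>
     (\<exists>f. bij_betw f V1 V2 \<and> (\<forall>x\<in>V1. \<forall>y\<in>V1. E1 x y \<longleftrightarrow> E2 (f x) (f y)))"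

definition has_vertex_minor ::
  "'a set \<Rightarrow> ('a \<Rightarrow> 'a \<Rightarrow> bool) \<Rightarrow> 'b set \<Rightarrow> ('b \<Rightarrow> 'b \<Rightarrow> bool) \<Rightarrow> bool" where
  "has_vertex_minor V E VH EH \<longleftrightarrow>
     (\<exists>E' U. lc_reach V E E' \<and> U \<subseteq> V \<and> graph_iso U (induced E' U) VH EH)"

text \<open>The cycle of length m on vertices 0,...,m-1 (intended for m \<ge> 3).\<close>
definition cycle_V :: "nat \<Rightarrow> nat set" where
  "cycle_V m = {..<m}"

definition cycle_E :: "nat \<Rightarrow> nat \<Rightarrow> nat \<Rightarrow> bool" where
  "cycle_E m i j \<longleftrightarrow> i < m \<and> j < m \<and> (j = Suc i mod m \<or> i = Suc j mod m)"

text \<open>Generalized ladder: G with vertex-disjoint paths P = p_1...p_a, Q = q_1...q_b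
  (given as lists of distinct vertices, a,b \<ge> 1) covering V, every edge not on P or Q
  joins P and Q, p_1 q_1 and p_a q_b are edges, and no two chords cross.\<close>
definition gen_ladder_wrt ::
  "'a set \<Rightarrow> ('a \<Rightarrow> 'a \<Rightarrow> bool) \<Rightarrow> 'a list \<Rightarrow> 'a list \<Rightarrow> bool" where
  "gen_ladder_wrt V E P Q \<longleftrightarrow>
     graph V E \<and> P \<noteq> [] \<and> Q \<noteq> [] \<and> distinct P \<and> distinct Q \<and>
     set P \<inter> set Q = {} \<and> V = set P \<union> set Q \<and>
     (\<forall>i. Suc i < length P \<longrightarrow> E (P ! i) (P ! Suc i)) \<and>
     (\<forall>j. Suc j < length Q \<longrightarrow> E (Q ! j) (Q ! Suc j)) \<and>
     (\<forall>i<length P. \<forall>i'<length P. E (P ! i) (P ! i') \<longrightarrow> i' = Suc i \<or> i = Suc i') \<and>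
     (\<forall>j<length Q. \<forall>j'<length Q. E (Q ! j) (Q ! j') \<longrightarrow> j' = Suc j \<or> j = Suc j') \<and>
     E (hd P) (hd Q) \<and> E (last P) (last Q) \<and>
     (\<forall>i<length P. \<forall>i'<length P. \<forall>j<length Q. \<forall>j'<length Q.
        E (P ! i) (Q ! j) \<and> E (P ! i') (Q ! j') \<and> i < i' \<longrightarrow> \<not> j > j')"

definition gen_ladder :: "'a set \<Rightarrow> ('a \<Rightarrow> 'a \<Rightarrow> bool) \<Rightarrow> bool" where
  "gen_ladder V E \<longleftrightarrow> (\<exists>P Q. gen_ladder_wrt V E P Q)"

end

theory Submission
  imports Defs
begin


lemma induced_local_comp:
  assumes "v \<in> U"
  shows "induced (local_comp E v) U = local_comp (induced E U) v"
  using assms by (auto simp: induced_def local_comp_def fun_eq_iff)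

lemma lc_reach_trans:
  assumes "lc_reach V E2 E3" "lc_reach V E1 E2"
  shows "lc_reach V E1 E3"
  using assms by (induction rule: lc_reach.induct) (auto intro: lc_reach.step)

lemma induced_idem: "induced (induced E U) U = induced E U"
  by (auto simp: induced_def fun_eq_iff)

lemma lc_reach_induced_closed:
  assumes "lc_reach U E1 F" "E1 = induced E1 U"
  shows "F = induced F U"
  using assms
proof (induction rule: lc_reach.induct)
  case refl then show ?case by simp
next
  case (step E' v)
  then have "E' = induced E' U" by simp
  then have "local_comp E' v = local_comp (induced E' U) v" by simp
  also have "\<dots> = induced (local_comp E' v) U"
    using step.hyps(2) by (simp add: induced_local_comp)
  finally show ?case by (simp add: induced_idem)
qed

lemma lc_reach_lift:
  assumes "lc_reach U (induced E U) F" "U \<subseteq> V"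
  shows "\<exists>E''. lc_reach V E E'' \<and> F = induced E'' U"
  using assms
proof (induction rule: lc_reach.induct)
  case refl then show ?case by (auto intro: lc_reach.refl)
next
  case (step E' v)
  then obtain E'' where h: "lc_reach V E E''" "E' = induced E'' U" by blast
  have "lc_reach V E (local_comp E'' v)" using h(1) step.hyps(2) step.prems
    by (auto intro: lc_reach.step)
  moreover have "local_comp E' v = induced (local_comp E'' v) U"
    using h(2) step.hyps(2) by (simp add: induced_local_comp)
  ultimately show ?case by blast
qed

lemma lc_reach_iso:
  assumes "lc_reach W E2 F2" "bij_betw f U W" "\<forall>x\<in>U. \<forall>y\<in>U. E1 x y \<longleftrightarrow> E2 (f x) (f y)"
  shows "\<exists>F1. lc_reach U E1 F1 \<and> (\<forall>x\<in>U. \<forall>y\<in>U. F1 x y \<longleftrightarrow> F2 (f x) (f y))"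
  using assms
proof (induction rule: lc_reach.induct)
  case refl then show ?case by (auto intro: lc_reach.refl)
next
  case (step E' v)
  then obtain F1 where h: "lc_reach U E1 F1" "\<forall>x\<in>U. \<forall>y\<in>U. F1 x y \<longleftrightarrow> E' (f x) (f y)" by blast
  obtain u where u: "u \<in> U" "f u = v" using step.hyps(2) step.prems(1)
    by (metis bij_betw_def imageE)
  have inj: "inj_on f U" using step.prems(1) by (simp add: bij_betw_def)
  have "lc_reach U E1 (local_comp F1 u)" using h(1) u(1) by (rule lc_reach.step)
  moreover have "\<forall>x\<in>U. \<forall>y\<in>U. local_comp F1 u x y \<longleftrightarrow> local_comp E' v (f x) (f y)"
  proof (intro ballI)
    fix x y assume xy: "x \<in> U" "y \<in> U"
    have "x \<noteq> y \<longleftrightarrow> f x \<noteq> f y" using inj xy by (metis inj_on_contraD)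
    then show "local_comp F1 u x y \<longleftrightarrow> local_comp E' v (f x) (f y)"
      using h(2) xy u by (simp add: local_comp_def)
  qed
  ultimately show ?case by blast
qed

lemma graph_iso_trans:
  assumes "graph_iso V1 E1 V2 E2" "graph_iso V2 E2 V3 E3"
  shows "graph_iso V1 E1 V3 E3"
proof -
  obtain f where f: "bij_betw f V1 V2" "\<forall>x\<in>V1. \<forall>y\<in>V1. E1 x y \<longleftrightarrow> E2 (f x) (f y)"
    using assms(1) by (auto simp: graph_iso_def)
  obtain g where g: "bij_betw g V2 V3" "\<forall>x\<in>V2. \<forall>y\<in>V2. E2 x y \<longleftrightarrow> E3 (g x) (g y)"
    using assms(2) by (auto simp: graph_iso_def)
  have "bij_betw (g \<circ> f) V1 V3" using f(1) g(1) by (rule bij_betw_trans)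
  moreover have "\<forall>x\<in>V1. \<forall>y\<in>V1. E1 x y \<longleftrightarrow> E3 ((g \<circ> f) x) ((g \<circ> f) y)"
    using f g bij_betwE[OF f(1)] by auto
  ultimately show ?thesis unfolding graph_iso_def by blast
qed

lemma has_vertex_minor_trans:
  assumes "has_vertex_minor V E V2 E2" "has_vertex_minor V2 E2 V3 E3"
  shows "has_vertex_minor V E V3 E3"
proof -
  obtain E' U where 1: "lc_reach V E E'" "U \<subseteq> V" "graph_iso U (induced E' U) V2 E2"
    using assms(1) by (auto simp: has_vertex_minor_def)
  obtain E2' U2 where 2: "lc_reach V2 E2 E2'" "U2 \<subseteq> V2" "graph_iso U2 (induced E2' U2) V3 E3"
    using assms(2) by (auto simp: has_vertex_minor_def)
  obtain f where f: "bij_betw f U V2" "\<forall>x\<in>U. \<forall>y\<in>U. induced E' U x y \<longleftrightarrow> E2 (f x) (f y)"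
    using 1(3) by (auto simp: graph_iso_def)
  obtain F1 where F1: "lc_reach U (induced E' U) F1" "\<forall>x\<in>U. \<forall>y\<in>U. F1 x y \<longleftrightarrow> E2' (f x) (f y)"
    using lc_reach_iso[OF 2(1) f] by blast
  obtain E'' where E'': "lc_reach V E' E''" "F1 = induced E'' U"
    using lc_reach_lift[OF F1(1) 1(2)] by blast
  have reach: "lc_reach V E E''" using lc_reach_trans[OF E''(1) 1(1)] .
  define U' where "U' = U \<inter> f -` U2"
  have U'sub: "U' \<subseteq> V" using 1(2) by (auto simp: U'_def)
  have bij': "bij_betw f U' U2"
  proof -
    have "f ` U' = U2" using f(1) 2(2) unfolding U'_def bij_betw_def by auto
    moreover have "inj_on f U'" using f(1) unfolding U'_def bij_betw_def by (auto intro: inj_on_subset)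
    ultimately show ?thesis by (simp add: bij_betw_def)
  qed
  have "graph_iso U' (induced E'' U') U2 (induced E2' U2)"
    unfolding graph_iso_def
  proof (intro exI conjI)
    show "bij_betw f U' U2" by (rule bij')
    show "\<forall>x\<in>U'. \<forall>y\<in>U'. induced E'' U' x y \<longleftrightarrow> induced E2' U2 (f x) (f y)"
      using F1(2) E''(2) by (auto simp: U'_def induced_def fun_eq_iff)
  qed
  then have "graph_iso U' (induced E'' U') V3 E3" using 2(3) by (rule graph_iso_trans)
  then show ?thesis using reach U'sub by (auto simp: has_vertex_minor_def)
qed

lemma has_vertex_minor_iso:
  assumes "graph_iso V E V2 E2"
  shows "has_vertex_minor V E V2 E2"
proof -
  have "graph_iso V (induced E V) V2 E2"
    using assms by (auto simp: graph_iso_def induced_def)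
  then show ?thesis unfolding has_vertex_minor_def by (auto intro: lc_reach.refl)
qed

lemma has_vertex_minor_lc_del:
  assumes "v \<in> V" "graph_iso (V - {v}) (induced (local_comp E v) (V - {v})) V2 E2"
  shows "has_vertex_minor V E V2 E2"
proof -
  have "lc_reach V E (local_comp E v)" using assms(1) by (rule lc_reach.step[OF lc_reach.refl])
  then show ?thesis unfolding has_vertex_minor_def using assms by blast
qed

lemma has_vertex_minor_induced:
  assumes "U \<subseteq> V" "graph_iso U (induced E U) V2 E2"
  shows "has_vertex_minor V E V2 E2"
  unfolding has_vertex_minor_def using assms by (auto intro: lc_reach.refl)


type_synonym vtx = "bool \<times> nat"

definition LV :: "nat \<Rightarrow> nat \<Rightarrow> vtx set" where
  "LV A B = {v. if fst v then snd v \<le> B else snd v \<le> A}"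

definition LE :: "nat \<Rightarrow> nat \<Rightarrow> (nat \<times> nat) set \<Rightarrow> vtx \<Rightarrow> vtx \<Rightarrow> bool" where
  "LE A B C u v =
     (if fst u = fst v then (if fst u then snd u \<le> B \<and> snd v \<le> B else snd u \<le> A \<and> snd v \<le> A)
                            \<and> (snd v = Suc (snd u) \<or> snd u = Suc (snd v))
      else if fst u then (snd v, snd u) \<in> C \<and> snd v \<le> A \<and> snd u \<le> B
      else (snd u, snd v) \<in> C \<and> snd u \<le> A \<and> snd v \<le> B)"

lemma LV_simps[simp]:
  "(False, x) \<in> LV A B \<longleftrightarrow> x \<le> A" "(True, y) \<in> LV A B \<longleftrightarrow> y \<le> B"
  by (auto simp: LV_def)

lemma LE_simps[simp]:
  "LE A B C (False,x) (False,y) \<longleftrightarrow> x \<le> A \<and> y \<le> A \<and> (y = Suc x \<or> x = Suc y)"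
  "LE A B C (True,x) (True,y) \<longleftrightarrow> x \<le> B \<and> y \<le> B \<and> (y = Suc x \<or> x = Suc y)"
  "LE A B C (False,x) (True,y) \<longleftrightarrow> (x,y) \<in> C \<and> x \<le> A \<and> y \<le> B"
  "LE A B C (True,y) (False,x) \<longleftrightarrow> (x,y) \<in> C \<and> x \<le> A \<and> y \<le> B"
  by (auto simp: LE_def)

lemma vm_by_lc_del:
  assumes "v \<in> V" "bij_betw f (V - {v}) V2"
    "\<And>x y. x \<in> V - {v} \<Longrightarrow> y \<in> V - {v} \<Longrightarrow> local_comp E v x y \<longleftrightarrow> E2 (f x) (f y)"
  shows "has_vertex_minor V E V2 E2"
proof (rule has_vertex_minor_lc_del[OF assms(1)])
  show "graph_iso (V - {v}) (induced (local_comp E v) (V - {v})) V2 E2"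
    unfolding graph_iso_def using assms(2,3) by (auto simp: induced_def)
qed

lemma vm_by_induced:
  assumes "U \<subseteq> V" "bij_betw f U V2"
    "\<And>x y. x \<in> U \<Longrightarrow> y \<in> U \<Longrightarrow> E x y \<longleftrightarrow> E2 (f x) (f y)"
  shows "has_vertex_minor V E V2 E2"
proof (rule has_vertex_minor_induced[OF assms(1)])
  show "graph_iso U (induced E U) V2 E2"
    unfolding graph_iso_def using assms(2,3) by (auto simp: induced_def)
qed

lemma local_comp_simp: "local_comp E v x y = (if E v x \<and> E v y \<and> x \<noteq> y then \<not> E x y else E x y)"
  by (simp add: local_comp_def)

lemma forall_vtx: "(\<forall>v::vtx. P v) \<longleftrightarrow> (\<forall>x. P (False,x)) \<and> (\<forall>y. P (True,y))"
  by (metis (full_types) prod.collapse)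

lemma swap_mem[simp]: "(a,b) \<in> prod.swap ` C \<longleftrightarrow> (b,a) \<in> C"
  by force

lemma swap_iso: "graph_iso (LV A B) (LE A B C) (LV B A) (LE B A (prod.swap ` C))"
  unfolding graph_iso_def
proof (intro exI conjI)
  let ?f = "\<lambda>v::vtx. (\<not> fst v, snd v)"
  show "bij_betw ?f (LV A B) (LV B A)"
    by (rule bij_betw_byWitness[where f' = ?f]) (auto simp: LV_def)
  show "\<forall>x\<in>LV A B. \<forall>y\<in>LV A B. LE A B C x y \<longleftrightarrow> LE B A (prod.swap ` C) (?f x) (?f y)"
    by (auto simp: LE_def LV_def)
qed


lemma op1p_graph:
  assumes i: "0 < i" "i < A" and deg: "\<forall>y. (i,y) \<in> C \<longrightarrow> y = j"
    and rng: "\<forall>x y. (x,y) \<in> C \<longrightarrow> x \<le> A \<and> y \<le> B"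
    and C': "C' = {(x,y). if x < i then (((x,y) \<in> C) \<noteq> ((i,j) \<in> C \<and> y = j \<and> Suc x = i))
                          else (((Suc x,y) \<in> C) \<noteq> ((i,j) \<in> C \<and> y = j \<and> x = i))}"
  shows "has_vertex_minor (LV A B) (LE A B C) (LV (A-1) B) (LE (A-1) B C')"
proof -
  let ?v = "(False, i) :: vtx"
  define s where "s = (\<lambda>a::nat. if a < i then a else a - 1)"
  define f where "f = (\<lambda>v::vtx. if fst v then v else (False, s (snd v)))"
  define g where "g = (\<lambda>v::vtx. if fst v then v else (False, if snd v < i then snd v else Suc (snd v)))"
  have bij: "bij_betw f (LV A B - {?v}) (LV (A-1) B)"
    by (rule bij_betw_byWitness[where f'=g]) (use i in \<open>auto simp: f_def g_def s_def LV_def split: if_splits\<close>)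
  have iA: "i \<le> A" using i by simp
  have nbP: "LE A B C ?v (False,a) \<longleftrightarrow> a = Suc i \<or> i = Suc a" if "a \<le> A" for a
    using that i by auto
  have nbQ: "LE A B C ?v (True,b) \<longleftrightarrow> b = j \<and> (i,j) \<in> C" for b
    using deg rng by auto
  show ?thesis
  proof (rule vm_by_lc_del[OF _ bij])
    show "?v \<in> LV A B" using i by simp
    fix x y assume x: "x \<in> LV A B - {?v}" and y: "y \<in> LV A B - {?v}"
    obtain bx a where xa: "x = (bx, a)" by fastforce
    obtain by' b where yb: "y = (by', b)" by fastforce
    show "local_comp (LE A B C) ?v x y \<longleftrightarrow> LE (A - 1) B C' (f x) (f y)"
    proof (cases bx; cases by')
      assume "\<not> bx" "\<not> by'"
      then have h: "x = (False,a)" "y = (False,b)" "a \<le> A" "b \<le> A" "a \<noteq> i" "b \<noteq> i"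
        using x y xa yb by auto
      have "local_comp (LE A B C) ?v x y \<longleftrightarrow>
        (if (a = Suc i \<or> i = Suc a) \<and> (b = Suc i \<or> i = Suc b) \<and> a \<noteq> b then \<not> (b = Suc a \<or> a = Suc b)
         else (b = Suc a \<or> a = Suc b))"
        using h nbP by (simp add: local_comp_simp)
      also have "\<dots> \<longleftrightarrow> (s b = Suc (s a) \<or> s a = Suc (s b))"
        using h i unfolding s_def by (cases "a < i"; cases "b < i") auto
      also have "\<dots> \<longleftrightarrow> LE (A - 1) B C' (f x) (f y)"
        using h i unfolding f_def s_def by auto
      finally show ?thesis .
    next
      assume "bx" "by'"
      then have h: "x = (True,a)" "y = (True,b)" "a \<le> B" "b \<le> B"
        using x y xa yb by auto
      show ?thesis using h nbQ deg by (auto simp: local_comp_simp f_def)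
    next
      assume "\<not> bx" "by'"
      then have h: "x = (False,a)" "y = (True,b)" "a \<le> A" "b \<le> B" "a \<noteq> i"
        using x y xa yb by auto
      have "local_comp (LE A B C) ?v x y \<longleftrightarrow>
         (if (a = Suc i \<or> i = Suc a) \<and> (b = j \<and> (i,j) \<in> C) then (a,b) \<notin> C else (a,b) \<in> C)"
        using h nbP nbQ iA deg by (auto simp add: local_comp_simp)
      also have "\<dots> \<longleftrightarrow> (s a, b) \<in> C'"
        using h i unfolding C' s_def by (cases "a < i") auto
      also have "\<dots> \<longleftrightarrow> LE (A - 1) B C' (f x) (f y)"
        using h i unfolding f_def s_def by auto
      finally show ?thesis .
    next
      assume "bx" "\<not> by'"
      then have h: "x = (True,a)" "y = (False,b)" "a \<le> B" "b \<le> A" "b \<noteq> i"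
        using x y xa yb by auto
      have "local_comp (LE A B C) ?v x y \<longleftrightarrow>
         (if (b = Suc i \<or> i = Suc b) \<and> (a = j \<and> (i,j) \<in> C) then (b,a) \<notin> C else (b,a) \<in> C)"
        using h nbP nbQ iA deg by (auto simp add: local_comp_simp)
      also have "\<dots> \<longleftrightarrow> (s b, a) \<in> C'"
        using h i unfolding C' s_def by (cases "b < i") auto
      also have "\<dots> \<longleftrightarrow> LE (A - 1) B C' (f x) (f y)"
        using h i unfolding f_def s_def by auto
      finally show ?thesis .
    qed
  qed
qed


lemma twist_graph:
  assumes i: "0 < i" "i < A" and jB: "Suc j \<le> B"
    and deg: "\<forall>y. (i,y) \<in> C \<longleftrightarrow> y = j \<or> y = Suc j"
    and rng: "\<forall>x y. (x,y) \<in> C \<longrightarrow> x \<le> A \<and> y \<le> B"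
    and ncl: "\<forall>x y. (x,y) \<in> C \<longrightarrow> x < i \<longrightarrow> y \<le> j"
    and ncr: "\<forall>x y. (x,y) \<in> C \<longrightarrow> i < x \<longrightarrow> Suc j \<le> y"
    and C': "C' = {(x,y). if x < i then (if y \<le> j then (((x,y) \<in> C) \<noteq> (Suc x = i \<and> y = j))
                                        else (Suc x = i \<and> y = Suc j))
                          else (if y \<le> j then False
                                else (((y + i - j, x + Suc j - i) \<in> C) \<noteq> (x = i \<and> y = Suc j)))}"
  shows "has_vertex_minor (LV A B) (LE A B C) (LV (i + B - Suc j) (j + A - i)) (LE (i + B - Suc j) (j + A - i) C')"
proof -
  let ?v = "(False, i) :: vtx"
  define f where "f = (\<lambda>v::vtx. if fst v then (if snd v \<le> j then v else (False, i + snd v - Suc j))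
                                 else (if snd v < i then v else (True, j + snd v - i)))"
  define g where "g = (\<lambda>v::vtx. if fst v then (if snd v \<le> j then v else (False, snd v + i - j))
                                 else (if snd v < i then v else (True, snd v + Suc j - i)))"
  have bij: "bij_betw f (LV A B - {?v}) (LV (i + B - Suc j) (j + A - i))"
    by (rule bij_betw_byWitness[where f'=g]) (use i jB in \<open>auto simp: f_def g_def LV_def split: if_splits\<close>)
  have iA: "i \<le> A" using i by simp
  have nbP: "LE A B C ?v (False,a) \<longleftrightarrow> a = Suc i \<or> i = Suc a" if "a \<le> A" for a
    using that i by auto
  have nbQ: "LE A B C ?v (True,b) \<longleftrightarrow> b = j \<or> b = Suc j" for b
    using deg rng jB by auto
  show ?thesis
  proof (rule vm_by_lc_del[OF _ bij])
    show "?v \<in> LV A B" using i by simp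
    fix x y assume x: "x \<in> LV A B - {?v}" and y: "y \<in> LV A B - {?v}"
    obtain bx a where xa: "x = (bx, a)" by fastforce
    obtain by' b where yb: "y = (by', b)" by fastforce
    show "local_comp (LE A B C) ?v x y \<longleftrightarrow> LE (i + B - Suc j) (j + A - i) C' (f x) (f y)"
    proof (cases bx; cases by')
      assume "\<not> bx" "\<not> by'"
      then have h: "x = (False,a)" "y = (False,b)" "a \<le> A" "b \<le> A" "a \<noteq> i" "b \<noteq> i"
        using x y xa yb by auto
      have "local_comp (LE A B C) ?v x y \<longleftrightarrow>
        (if (a = Suc i \<or> i = Suc a) \<and> (b = Suc i \<or> i = Suc b) \<and> a \<noteq> b then \<not> (b = Suc a \<or> a = Suc b)
         else (b = Suc a \<or> a = Suc b))"
        using h nbP by (simp add: local_comp_simp)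
      also have "\<dots> \<longleftrightarrow> LE (i + B - Suc j) (j + A - i) C' (f x) (f y)"
      proof (cases "a < i"; cases "b < i")
        assume "a < i" "b < i" then show ?thesis using h i jB by (auto simp: f_def)
      next
        assume "\<not> a < i" "\<not> b < i" then show ?thesis using h i jB by (auto simp: f_def)
      next
        assume "a < i" "\<not> b < i" then show ?thesis using h i jB unfolding C' by (auto simp: f_def)
      next
        assume "\<not> a < i" "b < i" then show ?thesis using h i jB unfolding C' by (auto simp: f_def)
      qed
      finally show ?thesis .
    next
      assume "bx" "by'"
      then have h: "x = (True,a)" "y = (True,b)" "a \<le> B" "b \<le> B"
        using x y xa yb by auto
      have "local_comp (LE A B C) ?v x y \<longleftrightarrow>
        (if (a = j \<or> a = Suc j) \<and> (b = j \<or> b = Suc j) \<and> a \<noteq> b then \<not> (b = Suc a \<or> a = Suc b)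
         else (b = Suc a \<or> a = Suc b))"
        unfolding local_comp_simp h(1,2) nbQ using h by simp
      also have "\<dots> \<longleftrightarrow> LE (i + B - Suc j) (j + A - i) C' (f x) (f y)"
      proof (cases "a \<le> j"; cases "b \<le> j")
        assume "a \<le> j" "b \<le> j" then show ?thesis using h i jB by (auto simp: f_def)
      next
        assume "\<not> a \<le> j" "\<not> b \<le> j" then show ?thesis using h i jB by (auto simp: f_def)
      next
        assume "a \<le> j" "\<not> b \<le> j" then show ?thesis using h i jB unfolding C' by (auto simp: f_def)
      next
        assume "\<not> a \<le> j" "b \<le> j" then show ?thesis using h i jB unfolding C' by (auto simp: f_def)
      qed
      finally show ?thesis .
    next
      assume "\<not> bx" "by'"
      then have h: "x = (False,a)" "y = (True,b)" "a \<le> A" "b \<le> B" "a \<noteq> i"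
        using x y xa yb by auto
      have "local_comp (LE A B C) ?v x y \<longleftrightarrow>
         (if (a = Suc i \<or> i = Suc a) \<and> (b = j \<or> b = Suc j) then (a,b) \<notin> C else (a,b) \<in> C)"
        unfolding local_comp_simp h(1,2) nbQ nbP[OF h(3)] using h by simp
      also have "\<dots> \<longleftrightarrow> LE (i + B - Suc j) (j + A - i) C' (f x) (f y)"
      proof (cases "a < i"; cases "b \<le> j")
        assume "a < i" "b \<le> j" then show ?thesis using h i jB unfolding C' by (auto simp: f_def)
      next
        assume "\<not> a < i" "\<not> b \<le> j" then show ?thesis using h i jB unfolding C' by (auto simp: f_def)
      next
        assume ab: "a < i" "\<not> b \<le> j"
        then have "(a,b) \<notin> C" using ncl by force
        then show ?thesis using h i jB ab by (auto simp: f_def)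
      next
        assume ab: "\<not> a < i" "b \<le> j"
        then have "(a,b) \<notin> C" using ncr h(5) by force
        then show ?thesis using h i jB ab by (auto simp: f_def)
      qed
      finally show ?thesis .
    next
      assume "bx" "\<not> by'"
      then have h: "x = (True,a)" "y = (False,b)" "a \<le> B" "b \<le> A" "b \<noteq> i"
        using x y xa yb by auto
      have "local_comp (LE A B C) ?v x y \<longleftrightarrow>
         (if (b = Suc i \<or> i = Suc b) \<and> (a = j \<or> a = Suc j) then (b,a) \<notin> C else (b,a) \<in> C)"
        unfolding local_comp_simp h(1,2) nbQ nbP[OF h(4)] using h by auto
      also have "\<dots> \<longleftrightarrow> LE (i + B - Suc j) (j + A - i) C' (f x) (f y)"
      proof (cases "b < i"; cases "a \<le> j")
        assume "b < i" "a \<le> j" then show ?thesis using h i jB unfolding C' by (auto simp: f_def)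
      next
        assume "\<not> b < i" "\<not> a \<le> j" then show ?thesis using h i jB unfolding C' by (auto simp: f_def)
      next
        assume ab: "b < i" "\<not> a \<le> j"
        then have "(b,a) \<notin> C" using ncl by force
        then show ?thesis using h i jB ab by (auto simp: f_def)
      next
        assume ab: "\<not> b < i" "a \<le> j"
        then have "(b,a) \<notin> C" using ncr h(5) by force
        then show ?thesis using h i jB ab by (auto simp: f_def)
      qed
      finally show ?thesis .
    qed
  qed
qed


fun inC :: "(nat \<times> nat) list \<Rightarrow> nat \<Rightarrow> nat \<Rightarrow> bool" where
  "inC [] x y = (x = 0 \<and> y = 0)"
| "inC (s # w) x y = (x = 0 \<and> y = 0 \<or> fst s \<le> x \<and> snd s \<le> y \<and> inC w (x - fst s) (y - snd s))"

fun WA :: "(nat \<times> nat) list \<Rightarrow> nat" where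
  "WA [] = 0" | "WA (s # w) = fst s + WA w"
fun WB :: "(nat \<times> nat) list \<Rightarrow> nat" where
  "WB [] = 0" | "WB (s # w) = snd s + WB w"

fun pts :: "(nat \<times> nat) list \<Rightarrow> (nat \<times> nat) list" where
  "pts [] = [(0,0)]"
| "pts (s # w) = (0,0) # map (\<lambda>p. (fst s + fst p, snd s + snd p)) (pts w)"

definition CS :: "(nat \<times> nat) list \<Rightarrow> (nat \<times> nat) set" where
  "CS w = {(x,y). inC w x y}"

definition vmw :: "(nat \<times> nat) list \<Rightarrow> (nat \<times> nat) list \<Rightarrow> bool" where
  "vmw w w' \<longleftrightarrow> has_vertex_minor (LV (WA w) (WB w)) (LE (WA w) (WB w) (CS w))
                                (LV (WA w') (WB w')) (LE (WA w') (WB w') (CS w'))"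

lemma vmw_trans: "vmw w1 w2 \<Longrightarrow> vmw w2 w3 \<Longrightarrow> vmw w1 w3"
  unfolding vmw_def by (rule has_vertex_minor_trans)

lemma WA_append[simp]: "WA (u @ v) = WA u + WA v" by (induction u) auto
lemma WB_append[simp]: "WB (u @ v) = WB u + WB v" by (induction u) auto

lemma inC_le: "inC w x y \<Longrightarrow> x \<le> WA w \<and> y \<le> WB w"
  by (induction w arbitrary: x y) force+

lemma inC_end: "inC w (WA w) (WB w)"
  by (induction w) auto

lemma inC_0[simp]: "inC w 0 0"
  by (cases w) auto

lemma inC_pts: "inC w x y \<longleftrightarrow> (x,y) \<in> set (pts w)"
proof (induction w arbitrary: x y)
  case Nil then show ?case by simp
next
  case (Cons s w)
  show ?case
  proof
    assume "inC (s # w) x y"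
    show "(x,y) \<in> set (pts (s # w))"
    proof (cases "x = 0 \<and> y = 0")
      case True then show ?thesis by simp
    next
      case False
      then have h: "fst s \<le> x" "snd s \<le> y" "(x - fst s, y - snd s) \<in> set (pts w)"
        using \<open>inC (s # w) x y\<close> Cons.IH by auto
      have "(x,y) = (\<lambda>p. (fst s + fst p, snd s + snd p)) (x - fst s, y - snd s)" using h by simp
      then have "(x,y) \<in> (\<lambda>p. (fst s + fst p, snd s + snd p)) ` set (pts w)"
        using h(3) by (rule image_eqI)
      then show ?thesis by simp
    qed
  next
    assume "(x,y) \<in> set (pts (s # w))"
    then show "inC (s # w) x y" using Cons.IH by auto
  qed
qed

lemma inC_append: "inC (u @ v) x y \<longleftrightarrow> inC u x y \<or> (WA u \<le> x \<and> WB u \<le> y \<and> inC v (x - WA u) (y - WB u))"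
proof (induction u arbitrary: x y)
  case Nil then show ?case by auto
next
  case (Cons s u)
  show ?case
  proof (cases "x = 0 \<and> y = 0")
    case True then show ?thesis by simp
  next
    case False
    then show ?thesis using Cons.IH[of "x - fst s" "y - snd s"] inC_end[of u]
      by (auto simp: diff_diff_add)
  qed
qed

lemma inC_app3: "inC (u @ m @ v) x y \<longleftrightarrow> inC u x y
   \<or> (\<exists>p \<in> set (pts m). x = WA u + fst p \<and> y = WB u + snd p)
   \<or> (WA u + WA m \<le> x \<and> WB u + WB m \<le> y \<and> inC v (x - (WA u + WA m)) (y - (WB u + WB m)))"
proof -
  have EQ: "(WA u \<le> x \<and> WB u \<le> y \<and> inC m (x - WA u) (y - WB u)) \<longleftrightarrow>
          (\<exists>p \<in> set (pts m). x = WA u + fst p \<and> y = WB u + snd p)"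
  proof
    assume h: "WA u \<le> x \<and> WB u \<le> y \<and> inC m (x - WA u) (y - WB u)"
    then have "(x - WA u, y - WB u) \<in> set (pts m)" by (simp add: inC_pts)
    moreover have "x = WA u + fst (x - WA u, y - WB u) \<and> y = WB u + snd (x - WA u, y - WB u)" using h by simp
    ultimately show "\<exists>p \<in> set (pts m). x = WA u + fst p \<and> y = WB u + snd p" by blast
  next
    assume "\<exists>p \<in> set (pts m). x = WA u + fst p \<and> y = WB u + snd p"
    then obtain p where "p \<in> set (pts m)" "x = WA u + fst p" "y = WB u + snd p" by blast
    then show "WA u \<le> x \<and> WB u \<le> y \<and> inC m (x - WA u) (y - WB u)" by (simp add: inC_pts)
  qed
  have EQ2: "(WA u \<le> x \<and> WB u \<le> y \<and> WA m \<le> x - WA u \<and> WB m \<le> y - WB u \<and> inC v (x - WA u - WA m) (y - WB u - WB m))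
     \<longleftrightarrow> (WA u + WA m \<le> x \<and> WB u + WB m \<le> y \<and> inC v (x - (WA u + WA m)) (y - (WB u + WB m)))"
    by (auto simp: diff_diff_add)
  have "inC (u @ m @ v) x y \<longleftrightarrow> inC u x y \<or> (WA u \<le> x \<and> WB u \<le> y \<and> inC (m @ v) (x - WA u) (y - WB u))"
    by (rule inC_append)
  also have "\<dots> \<longleftrightarrow> inC u x y \<or> (WA u \<le> x \<and> WB u \<le> y \<and> inC m (x - WA u) (y - WB u)) \<or>
       (WA u \<le> x \<and> WB u \<le> y \<and> WA m \<le> x - WA u \<and> WB m \<le> y - WB u \<and> inC v (x - WA u - WA m) (y - WB u - WB m))"
    by (auto simp add: inC_append)
  finally show ?thesis unfolding EQ EQ2 .
qed

lemma inC_u_le: "inC u x y \<Longrightarrow> x \<le> WA u \<and> y \<le> WB u" by (rule inC_le)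

lemma inC_map_swap: "inC (map prod.swap w) x y \<longleftrightarrow> inC w y x"
  by (induction w arbitrary: x y) auto

lemma WA_swap[simp]: "WA (map prod.swap w) = WB w" by (induction w) auto
lemma WB_swap[simp]: "WB (map prod.swap w) = WA w" by (induction w) auto

lemma CS_swap: "CS (map prod.swap w) = prod.swap ` CS w"
  by (auto simp: CS_def inC_map_swap image_iff)

lemma vmw_iso_swap: "graph_iso (LV (WA w) (WB w)) (LE (WA w) (WB w) (CS w))
   (LV (WA (map prod.swap w)) (WB (map prod.swap w))) (LE (WA (map prod.swap w)) (WB (map prod.swap w)) (CS (map prod.swap w)))"
  using swap_iso[of "WA w" "WB w" "CS w"] by (simp add: CS_swap)

lemma vmw_swap: assumes "vmw (map prod.swap w) (map prod.swap w')" shows "vmw w w'"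
proof -
  have 1: "has_vertex_minor (LV (WA w) (WB w)) (LE (WA w) (WB w) (CS w))
     (LV (WA (map prod.swap w)) (WB (map prod.swap w))) (LE (WA (map prod.swap w)) (WB (map prod.swap w)) (CS (map prod.swap w)))"
    by (rule has_vertex_minor_iso[OF vmw_iso_swap])
  have "map prod.swap (map prod.swap w') = w'" by (induction w') auto
  then have 2: "has_vertex_minor (LV (WA (map prod.swap w')) (WB (map prod.swap w'))) (LE (WA (map prod.swap w')) (WB (map prod.swap w')) (CS (map prod.swap w')))
      (LV (WA w') (WB w')) (LE (WA w') (WB w') (CS w'))"
    using has_vertex_minor_iso[OF vmw_iso_swap[of "map prod.swap w'"]] by simp
  show ?thesis unfolding vmw_def
    using has_vertex_minor_trans[OF has_vertex_minor_trans[OF 1 assms[unfolded vmw_def]] 2] .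
qed


lemma vmw_op1p_graph:
  assumes i: "0 < i" "i < WA w" and deg: "\<forall>y. inC w i y \<longrightarrow> y = j"
    and A': "WA w' = WA w - 1" and B': "WB w' = WB w"
    and C': "\<And>x y. inC w' x y \<longleftrightarrow> (if x < i then (inC w x y \<noteq> (inC w i j \<and> y = j \<and> Suc x = i))
                          else (inC w (Suc x) y \<noteq> (inC w i j \<and> y = j \<and> x = i)))"
  shows "vmw w w'"
proof -
  have "CS w' = {(x,y). if x < i then (((x,y) \<in> CS w) \<noteq> ((i,j) \<in> CS w \<and> y = j \<and> Suc x = i))
                          else (((Suc x,y) \<in> CS w) \<noteq> ((i,j) \<in> CS w \<and> y = j \<and> x = i))}"
    by (auto simp: CS_def C' split: if_splits)
  moreover have "\<forall>x y. (x,y) \<in> CS w \<longrightarrow> x \<le> WA w \<and> y \<le> WB w" by (auto simp: CS_def dest: inC_le)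
  moreover have "\<forall>y. (i,y) \<in> CS w \<longrightarrow> y = j" using deg by (auto simp: CS_def)
  ultimately show ?thesis unfolding vmw_def A' B' using op1p_graph[OF i] by blast
qed

lemma w_op1p_NN:
  assumes "(Suc p1,y1) \<noteq> (1,0)" "(Suc p2,y2) \<noteq> (1,0)"
  shows "vmw (u @ [(Suc p1,y1),(Suc p2,y2)] @ v) (u @ [(p1, y1), (1,0), (p2, y2)] @ v)"
proof (rule vmw_op1p_graph[where i = "WA u + Suc p1" and j = "WB u + y1"])
  let ?w = "u @ [(Suc p1,y1),(Suc p2,y2)] @ v"
  let ?w' = "u @ [(p1, y1), (1,0), (p2, y2)] @ v"
  note U = inC_u_le[of u] inC_end[of u]
  have W: "inC ?w x y \<longleftrightarrow> inC u x y \<or> (x = WA u \<and> y = WB u) \<or> (x = WA u + Suc p1 \<and> y = WB u + y1)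
     \<or> (x = WA u + Suc p1 + Suc p2 \<and> y = WB u + y1 + y2)
     \<or> (WA u + Suc p1 + Suc p2 \<le> x \<and> WB u + y1 + y2 \<le> y \<and> inC v (x - (WA u + Suc p1 + Suc p2)) (y - (WB u + y1 + y2)))" for x y
    using inC_app3[of u "[(Suc p1,y1),(Suc p2,y2)]" v x y] by (simp add: add.assoc)
  have W': "inC ?w' x y \<longleftrightarrow> inC u x y \<or> (x = WA u \<and> y = WB u) \<or> (x = WA u + p1 \<and> y = WB u + y1)
     \<or> (x = WA u + Suc p1 \<and> y = WB u + y1)
     \<or> (x = WA u + Suc p1 + p2 \<and> y = WB u + y1 + y2)
     \<or> (WA u + Suc p1 + p2 \<le> x \<and> WB u + y1 + y2 \<le> y \<and> inC v (x - (WA u + Suc p1 + p2)) (y - (WB u + y1 + y2)))" for x y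
    using inC_app3[of u "[(p1, y1), (1,0), (p2, y2)]" v x y] by (simp add: add.assoc)
  show "0 < WA u + Suc p1" by simp
  show "WA u + Suc p1 < WA ?w" by simp
  show "\<forall>y. inC ?w (WA u + Suc p1) y \<longrightarrow> y = WB u + y1"
    unfolding W by (auto dest: inC_u_le)
  show "WA ?w' = WA ?w - 1" by simp
  show "WB ?w' = WB ?w" by simp
  fix x y
  show "inC ?w' x y \<longleftrightarrow> (if x < WA u + Suc p1 then (inC ?w x y \<noteq> (inC ?w (WA u + Suc p1) (WB u + y1) \<and> y = WB u + y1 \<and> Suc x = WA u + Suc p1))
                          else (inC ?w (Suc x) y \<noteq> (inC ?w (WA u + Suc p1) (WB u + y1) \<and> y = WB u + y1 \<and> x = WA u + Suc p1)))"
    using inC_end[of u] assms unfolding W W' by (auto dest: inC_u_le)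
qed

lemma w_op1p_EN:
  assumes "(x0,y0) \<noteq> (0,0)" "(Suc p2,y2) \<noteq> (1,0)"
  shows "vmw (u @ (x0,y0) # (1,0) # (Suc p2,y2) # v) (u @ (Suc x0, y0) # (p2, y2) # v)"
proof (rule vmw_op1p_graph[where i = "WA u + Suc x0" and j = "WB u + y0"])
  let ?w = "u @ (x0,y0) # (1,0) # (Suc p2,y2) # v"
  let ?w' = "u @ (Suc x0, y0) # (p2, y2) # v"
  have W: "inC ?w x y \<longleftrightarrow> inC u x y \<or> (x = WA u \<and> y = WB u) \<or> (x = WA u + x0 \<and> y = WB u + y0)
     \<or> (x = WA u + Suc x0 \<and> y = WB u + y0)
     \<or> (x = WA u + Suc x0 + Suc p2 \<and> y = WB u + y0 + y2)
     \<or> (WA u + Suc x0 + Suc p2 \<le> x \<and> WB u + y0 + y2 \<le> y \<and> inC v (x - (WA u + Suc x0 + Suc p2)) (y - (WB u + y0 + y2)))" for x y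
    using inC_app3[of u "[(x0,y0),(1,0),(Suc p2,y2)]" v x y] by (simp add: add.assoc)
  have W': "inC ?w' x y \<longleftrightarrow> inC u x y \<or> (x = WA u \<and> y = WB u) \<or> (x = WA u + Suc x0 \<and> y = WB u + y0)
     \<or> (x = WA u + Suc x0 + p2 \<and> y = WB u + y0 + y2)
     \<or> (WA u + Suc x0 + p2 \<le> x \<and> WB u + y0 + y2 \<le> y \<and> inC v (x - (WA u + Suc x0 + p2)) (y - (WB u + y0 + y2)))" for x y
    using inC_app3[of u "[(Suc x0, y0), (p2, y2)]" v x y] by (simp add: add.assoc)
  show "0 < WA u + Suc x0" by simp
  show "WA u + Suc x0 < WA ?w" by simp
  show "\<forall>y. inC ?w (WA u + Suc x0) y \<longrightarrow> y = WB u + y0"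
    unfolding W by (auto dest: inC_u_le)
  show "WA ?w' = WA ?w - 1" by simp
  show "WB ?w' = WB ?w" by simp
  fix x y
  show "inC ?w' x y \<longleftrightarrow> (if x < WA u + Suc x0 then (inC ?w x y \<noteq> (inC ?w (WA u + Suc x0) (WB u + y0) \<and> y = WB u + y0 \<and> Suc x = WA u + Suc x0))
                          else (inC ?w (Suc x) y \<noteq> (inC ?w (WA u + Suc x0) (WB u + y0) \<and> y = WB u + y0 \<and> x = WA u + Suc x0)))"
    using inC_end[of u] assms unfolding W W' by (auto dest: inC_u_le)
qed

lemma w_op1p_NE:
  assumes "(Suc p1,y1) \<noteq> (1,0)" "(x3,y3) \<noteq> (0,0)"
  shows "vmw (u @ (Suc p1,y1) # (1,0) # (x3,y3) # v) (u @ (p1, y1) # (Suc x3, y3) # v)"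
proof (rule vmw_op1p_graph[where i = "WA u + Suc p1" and j = "WB u + y1"])
  let ?w = "u @ (Suc p1,y1) # (1,0) # (x3,y3) # v"
  let ?w' = "u @ (p1, y1) # (Suc x3, y3) # v"
  have W: "inC ?w x y \<longleftrightarrow> inC u x y \<or> (x = WA u \<and> y = WB u) \<or> (x = WA u + Suc p1 \<and> y = WB u + y1)
     \<or> (x = WA u + Suc (Suc p1) \<and> y = WB u + y1)
     \<or> (x = WA u + Suc (Suc p1) + x3 \<and> y = WB u + y1 + y3)
     \<or> (WA u + Suc (Suc p1) + x3 \<le> x \<and> WB u + y1 + y3 \<le> y \<and> inC v (x - (WA u + Suc (Suc p1) + x3)) (y - (WB u + y1 + y3)))" for x y
    using inC_app3[of u "[(Suc p1,y1),(1,0),(x3,y3)]" v x y] by (simp add: add.assoc)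
  have W': "inC ?w' x y \<longleftrightarrow> inC u x y \<or> (x = WA u \<and> y = WB u) \<or> (x = WA u + p1 \<and> y = WB u + y1)
     \<or> (x = WA u + Suc p1 + x3 \<and> y = WB u + y1 + y3)
     \<or> (WA u + Suc p1 + x3 \<le> x \<and> WB u + y1 + y3 \<le> y \<and> inC v (x - (WA u + Suc p1 + x3)) (y - (WB u + y1 + y3)))" for x y
    using inC_app3[of u "[(p1, y1), (Suc x3, y3)]" v x y] by (simp add: add.assoc)
  show "0 < WA u + Suc p1" by simp
  show "WA u + Suc p1 < WA ?w" by simp
  show "\<forall>y. inC ?w (WA u + Suc p1) y \<longrightarrow> y = WB u + y1"
    unfolding W by (auto dest: inC_u_le)
  show "WA ?w' = WA ?w - 1" by simp
  show "WB ?w' = WB ?w" by simp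
  fix x y
  show "inC ?w' x y \<longleftrightarrow> (if x < WA u + Suc p1 then (inC ?w x y \<noteq> (inC ?w (WA u + Suc p1) (WB u + y1) \<and> y = WB u + y1 \<and> Suc x = WA u + Suc p1))
                          else (inC ?w (Suc x) y \<noteq> (inC ?w (WA u + Suc p1) (WB u + y1) \<and> y = WB u + y1 \<and> x = WA u + Suc p1)))"
    using inC_end[of u] assms unfolding W W' by (auto dest: inC_u_le)
qed

lemma w_op1p_EE:
  assumes "(x0,y0) \<noteq> (0,0)" "(x3,y3) \<noteq> (0,0)"
  shows "vmw (u @ (x0,y0) # (1,0) # (1,0) # (x3,y3) # v) (u @ (Suc (x0 + x3), y0 + y3) # v)"
proof (rule vmw_op1p_graph[where i = "WA u + Suc x0" and j = "WB u + y0"])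
  let ?w = "u @ (x0,y0) # (1,0) # (1,0) # (x3,y3) # v"
  let ?w' = "u @ (Suc (x0 + x3), y0 + y3) # v"
  have W: "inC ?w x y \<longleftrightarrow> inC u x y \<or> (x = WA u \<and> y = WB u) \<or> (x = WA u + x0 \<and> y = WB u + y0)
     \<or> (x = WA u + Suc x0 \<and> y = WB u + y0)
     \<or> (x = WA u + Suc (Suc x0) \<and> y = WB u + y0)
     \<or> (x = WA u + Suc (Suc x0) + x3 \<and> y = WB u + y0 + y3)
     \<or> (WA u + Suc (Suc x0) + x3 \<le> x \<and> WB u + y0 + y3 \<le> y \<and> inC v (x - (WA u + Suc (Suc x0) + x3)) (y - (WB u + y0 + y3)))" for x y
    using inC_app3[of u "[(x0,y0),(1,0),(1,0),(x3,y3)]" v x y] by (simp add: add.assoc)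
  have W': "inC ?w' x y \<longleftrightarrow> inC u x y \<or> (x = WA u \<and> y = WB u)
     \<or> (x = WA u + Suc x0 + x3 \<and> y = WB u + y0 + y3)
     \<or> (WA u + Suc x0 + x3 \<le> x \<and> WB u + y0 + y3 \<le> y \<and> inC v (x - (WA u + Suc x0 + x3)) (y - (WB u + y0 + y3)))" for x y
    using inC_app3[of u "[(Suc (x0 + x3), y0 + y3)]" v x y] by (simp add: add.assoc)
  show "0 < WA u + Suc x0" by simp
  show "WA u + Suc x0 < WA ?w" by simp
  show "\<forall>y. inC ?w (WA u + Suc x0) y \<longrightarrow> y = WB u + y0"
    unfolding W by (auto dest: inC_u_le)
  show "WA ?w' = WA ?w - 1" by simp
  show "WB ?w' = WB ?w" by simp
  fix x y
  show "inC ?w' x y \<longleftrightarrow> (if x < WA u + Suc x0 then (inC ?w x y \<noteq> (inC ?w (WA u + Suc x0) (WB u + y0) \<and> y = WB u + y0 \<and> Suc x = WA u + Suc x0))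
                          else (inC ?w (Suc x) y \<noteq> (inC ?w (WA u + Suc x0) (WB u + y0) \<and> y = WB u + y0 \<and> x = WA u + Suc x0)))"
    using inC_end[of u] assms unfolding W W' by (auto dest: inC_u_le)
qed

lemma w_contract:
  shows "vmw (u @ (Suc (Suc p),y1) # v) (u @ (Suc p, y1) # v)"
proof (rule vmw_op1p_graph[where i = "WA u + 1" and j = "WB u"])
  let ?w = "u @ (Suc (Suc p),y1) # v"
  let ?w' = "u @ (Suc p, y1) # v"
  have W: "inC ?w x y \<longleftrightarrow> inC u x y \<or> (x = WA u \<and> y = WB u)
     \<or> (x = WA u + Suc (Suc p) \<and> y = WB u + y1)
     \<or> (WA u + Suc (Suc p) \<le> x \<and> WB u + y1 \<le> y \<and> inC v (x - (WA u + Suc (Suc p))) (y - (WB u + y1)))" for x y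
    using inC_app3[of u "[(Suc (Suc p),y1)]" v x y] by (simp add: add.assoc)
  have W': "inC ?w' x y \<longleftrightarrow> inC u x y \<or> (x = WA u \<and> y = WB u)
     \<or> (x = WA u + Suc p \<and> y = WB u + y1)
     \<or> (WA u + Suc p \<le> x \<and> WB u + y1 \<le> y \<and> inC v (x - (WA u + Suc p)) (y - (WB u + y1)))" for x y
    using inC_app3[of u "[(Suc p, y1)]" v x y] by (simp add: add.assoc)
  show "0 < WA u + 1" by simp
  show "WA u + 1 < WA ?w" by simp
  show "\<forall>y. inC ?w (WA u + 1) y \<longrightarrow> y = WB u"
    unfolding W by (auto dest: inC_u_le)
  show "WA ?w' = WA ?w - 1" by simp
  show "WB ?w' = WB ?w" by simp
  fix x y
  show "inC ?w' x y \<longleftrightarrow> (if x < WA u + 1 then (inC ?w x y \<noteq> (inC ?w (WA u + 1) (WB u) \<and> y = WB u \<and> Suc x = WA u + 1))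
                          else (inC ?w (Suc x) y \<noteq> (inC ?w (WA u + 1) (WB u) \<and> y = WB u \<and> x = WA u + 1)))"
    using inC_end[of u] unfolding W W' by (auto dest: inC_u_le)
qed


lemma vmw_twist_graph:
  assumes i: "0 < i" "i < WA w" and jB: "Suc j \<le> WB w"
    and deg: "\<forall>y. inC w i y \<longleftrightarrow> y = j \<or> y = Suc j"
    and ncl: "\<forall>x y. inC w x y \<longrightarrow> x < i \<longrightarrow> y \<le> j"
    and ncr: "\<forall>x y. inC w x y \<longrightarrow> i < x \<longrightarrow> Suc j \<le> y"
    and A': "WA w' = i + WB w - Suc j" and B': "WB w' = j + WA w - i"
    and C': "\<And>x y. inC w' x y \<longleftrightarrow> (if x < i then (if y \<le> j then (inC w x y \<noteq> (Suc x = i \<and> y = j))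
                                        else (Suc x = i \<and> y = Suc j))
                          else (if y \<le> j then False
                                else (inC w (y + i - j) (x + Suc j - i) \<noteq> (x = i \<and> y = Suc j))))"
  shows "vmw w w'"
proof -
  have CSeq: "CS w' = {(x,y). if x < i then (if y \<le> j then (((x,y) \<in> CS w) \<noteq> (Suc x = i \<and> y = j))
                                        else (Suc x = i \<and> y = Suc j))
                          else (if y \<le> j then False
                                else (((y + i - j, x + Suc j - i) \<in> CS w) \<noteq> (x = i \<and> y = Suc j)))}"
  proof (rule set_eqI)
    fix p :: "nat \<times> nat"
    obtain x y where p: "p = (x,y)" by fastforce
    show "p \<in> CS w' \<longleftrightarrow> p \<in> {(x,y). if x < i then (if y \<le> j then (((x,y) \<in> CS w) \<noteq> (Suc x = i \<and> y = j))
                                        else (Suc x = i \<and> y = Suc j))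
                          else (if y \<le> j then False
                                else (((y + i - j, x + Suc j - i) \<in> CS w) \<noteq> (x = i \<and> y = Suc j)))}"
      unfolding p CS_def mem_Collect_eq prod.case C' by simp
  qed
  have r: "\<forall>x y. (x,y) \<in> CS w \<longrightarrow> x \<le> WA w \<and> y \<le> WB w" by (auto simp: CS_def dest: inC_le)
  have d: "\<forall>y. (i,y) \<in> CS w \<longleftrightarrow> y = j \<or> y = Suc j" using deg by (auto simp: CS_def)
  have l: "\<forall>x y. (x,y) \<in> CS w \<longrightarrow> x < i \<longrightarrow> y \<le> j" using ncl by (auto simp: CS_def)
  have rr: "\<forall>x y. (x,y) \<in> CS w \<longrightarrow> i < x \<longrightarrow> Suc j \<le> y" using ncr by (auto simp: CS_def)
  show ?thesis unfolding vmw_def A' B' by (rule twist_graph[OF i jB d r l rr CSeq])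
qed

lemma w_twist_EE:
  assumes "(x0,y0) \<noteq> (0,0)" "(x3,y3) \<noteq> (0,0)"
  shows "vmw (u @ (x0,y0) # (1,0) # (0,1) # (1,0) # (x3,y3) # v) (u @ (x0, Suc y0) # (Suc y3, x3) # map prod.swap v)"
proof (rule vmw_twist_graph[where i = "WA u + Suc x0" and j = "WB u + y0"])
  let ?w = "u @ (x0,y0) # (1,0) # (0,1) # (1,0) # (x3,y3) # v"
  let ?w' = "u @ (x0, Suc y0) # (Suc y3, x3) # map prod.swap v"
  have W: "inC ?w x y \<longleftrightarrow> inC u x y \<or> (x = WA u \<and> y = WB u) \<or> (x = WA u + x0 \<and> y = WB u + y0)
     \<or> (x = WA u + Suc x0 \<and> y = WB u + y0)
     \<or> (x = WA u + Suc x0 \<and> y = WB u + Suc y0)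
     \<or> (x = WA u + Suc (Suc x0) \<and> y = WB u + Suc y0)
     \<or> (x = WA u + Suc (Suc x0) + x3 \<and> y = WB u + Suc y0 + y3)
     \<or> (WA u + Suc (Suc x0) + x3 \<le> x \<and> WB u + Suc y0 + y3 \<le> y \<and> inC v (x - (WA u + Suc (Suc x0) + x3)) (y - (WB u + Suc y0 + y3)))" for x y
    using inC_app3[of u "[(x0,y0),(1,0),(0,1),(1,0),(x3,y3)]" v x y] by (simp add: add.assoc)
  have W': "inC ?w' x y \<longleftrightarrow> inC u x y \<or> (x = WA u \<and> y = WB u) \<or> (x = WA u + x0 \<and> y = WB u + Suc y0)
     \<or> (x = WA u + x0 + Suc y3 \<and> y = WB u + Suc y0 + x3)
     \<or> (WA u + x0 + Suc y3 \<le> x \<and> WB u + Suc y0 + x3 \<le> y \<and> inC v (y - (WB u + Suc y0 + x3)) (x - (WA u + x0 + Suc y3)))" for x y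
    using inC_app3[of u "[(x0, Suc y0), (Suc y3, x3)]" "map prod.swap v" x y] by (simp add: add.assoc inC_map_swap)
  show "0 < WA u + Suc x0" by simp
  show "WA u + Suc x0 < WA ?w" by simp
  show "Suc (WB u + y0) \<le> WB ?w" by simp
  show "\<forall>y. inC ?w (WA u + Suc x0) y \<longleftrightarrow> y = WB u + y0 \<or> y = Suc (WB u + y0)"
    unfolding W by (auto dest: inC_u_le)
  show "\<forall>x y. inC ?w x y \<longrightarrow> x < WA u + Suc x0 \<longrightarrow> y \<le> WB u + y0"
    unfolding W by (auto dest: inC_u_le)
  show "\<forall>x y. inC ?w x y \<longrightarrow> WA u + Suc x0 < x \<longrightarrow> Suc (WB u + y0) \<le> y"
    unfolding W by (auto dest: inC_u_le)
  show "WA ?w' = WA u + Suc x0 + WB ?w - Suc (WB u + y0)" by simp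
  show "WB ?w' = WB u + y0 + WA ?w - (WA u + Suc x0)" by simp
  fix x y
  show "inC ?w' x y \<longleftrightarrow> (if x < WA u + Suc x0 then (if y \<le> WB u + y0 then (inC ?w x y \<noteq> (Suc x = WA u + Suc x0 \<and> y = WB u + y0))
                                        else (Suc x = WA u + Suc x0 \<and> y = Suc (WB u + y0)))
                          else (if y \<le> WB u + y0 then False
                                else (inC ?w (y + (WA u + Suc x0) - (WB u + y0)) (x + Suc (WB u + y0) - (WA u + Suc x0)) \<noteq> (x = WA u + Suc x0 \<and> y = Suc (WB u + y0)))))"
  proof (cases "x < WA u + Suc x0")
    case True
    show ?thesis
    proof (cases "y \<le> WB u + y0")
      case True
      then show ?thesis using \<open>x < WA u + Suc x0\<close> inC_end[of u] assms unfolding W W' by (auto dest: inC_u_le)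
    next
      case False
      then show ?thesis using \<open>x < WA u + Suc x0\<close> inC_end[of u] assms unfolding W W' by (auto dest: inC_u_le)
    qed
  next
    case False
    define a where "a = x - (WA u + Suc x0)"
    have xa: "x = WA u + Suc x0 + a" using False by (simp add: a_def)
    show ?thesis
    proof (cases "y \<le> WB u + y0")
      case True
      then show ?thesis using xa inC_end[of u] assms unfolding W' by (auto dest: inC_u_le)
    next
      case False
      define b where "b = y - Suc (WB u + y0)"
      have yb: "y = Suc (WB u + y0) + b" using False by (simp add: b_def)
      have e1: "y + (WA u + Suc x0) - (WB u + y0) = WA u + Suc x0 + Suc b" using yb by simp
      have e2: "x + Suc (WB u + y0) - (WA u + Suc x0) = WB u + y0 + Suc a" using xa by simp
      have L: "inC ?w' x y \<longleftrightarrow> (a = y3 \<and> b = x3) \<or> (y3 \<le> a \<and> x3 \<le> b \<and> inC v (b - x3) (a - y3))"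
        unfolding W' xa yb by (auto dest: inC_u_le)
      have R: "inC ?w (WA u + Suc x0 + Suc b) (WB u + y0 + Suc a) \<longleftrightarrow> (a = 0 \<and> b = 0) \<or> (a = y3 \<and> b = x3) \<or> (y3 \<le> a \<and> x3 \<le> b \<and> inC v (b - x3) (a - y3))"
        unfolding W by (auto dest: inC_u_le)
      show ?thesis using False \<open>\<not> x < WA u + Suc x0\<close> assms xa yb unfolding e1 e2 L R by auto
    qed
  qed
qed


lemma w_twist_EN:
  assumes "(x0,y0) \<noteq> (0,0)" "(Suc p2,y2) \<noteq> (1,0)"
  shows "vmw (u @ (x0,y0) # (1,0) # (0,1) # (Suc p2,y2) # v) (u @ (x0, Suc y0) # (1,0) # (y2, p2) # map prod.swap v)"
proof (rule vmw_twist_graph[where i = "WA u + Suc x0" and j = "WB u + y0"])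
  let ?w = "u @ (x0,y0) # (1,0) # (0,1) # (Suc p2,y2) # v"
  let ?w' = "u @ (x0, Suc y0) # (1,0) # (y2, p2) # map prod.swap v"
  have W: "inC ?w x y \<longleftrightarrow> inC u x y \<or> (x = WA u \<and> y = WB u) \<or> (x = WA u + x0 \<and> y = WB u + y0)
     \<or> (x = WA u + Suc x0 \<and> y = WB u + y0)
     \<or> (x = WA u + Suc x0 \<and> y = WB u + Suc y0)
     \<or> (x = WA u + Suc x0 + Suc p2 \<and> y = WB u + Suc y0 + y2)
     \<or> (WA u + Suc x0 + Suc p2 \<le> x \<and> WB u + Suc y0 + y2 \<le> y \<and> inC v (x - (WA u + Suc x0 + Suc p2)) (y - (WB u + Suc y0 + y2)))" for x y
    using inC_app3[of u "[(x0,y0),(1,0),(0,1),(Suc p2,y2)]" v x y] by (simp add: add.assoc)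
  have W': "inC ?w' x y \<longleftrightarrow> inC u x y \<or> (x = WA u \<and> y = WB u) \<or> (x = WA u + x0 \<and> y = WB u + Suc y0)
     \<or> (x = WA u + Suc x0 \<and> y = WB u + Suc y0)
     \<or> (x = WA u + Suc x0 + y2 \<and> y = WB u + Suc y0 + p2)
     \<or> (WA u + Suc x0 + y2 \<le> x \<and> WB u + Suc y0 + p2 \<le> y \<and> inC v (y - (WB u + Suc y0 + p2)) (x - (WA u + Suc x0 + y2)))" for x y
    using inC_app3[of u "[(x0, Suc y0), (1,0), (y2, p2)]" "map prod.swap v" x y] by (simp add: add.assoc inC_map_swap)
  show "0 < WA u + Suc x0" by simp
  show "WA u + Suc x0 < WA ?w" by simp
  show "Suc (WB u + y0) \<le> WB ?w" by simp
  show "\<forall>y. inC ?w (WA u + Suc x0) y \<longleftrightarrow> y = WB u + y0 \<or> y = Suc (WB u + y0)"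
    unfolding W by (auto dest: inC_u_le)
  show "\<forall>x y. inC ?w x y \<longrightarrow> x < WA u + Suc x0 \<longrightarrow> y \<le> WB u + y0"
    unfolding W by (auto dest: inC_u_le)
  show "\<forall>x y. inC ?w x y \<longrightarrow> WA u + Suc x0 < x \<longrightarrow> Suc (WB u + y0) \<le> y"
    unfolding W by (auto dest: inC_u_le)
  show "WA ?w' = WA u + Suc x0 + WB ?w - Suc (WB u + y0)" by simp
  show "WB ?w' = WB u + y0 + WA ?w - (WA u + Suc x0)" by simp
  fix x y
  show "inC ?w' x y \<longleftrightarrow> (if x < WA u + Suc x0 then (if y \<le> WB u + y0 then (inC ?w x y \<noteq> (Suc x = WA u + Suc x0 \<and> y = WB u + y0))
                                        else (Suc x = WA u + Suc x0 \<and> y = Suc (WB u + y0)))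
                          else (if y \<le> WB u + y0 then False
                                else (inC ?w (y + (WA u + Suc x0) - (WB u + y0)) (x + Suc (WB u + y0) - (WA u + Suc x0)) \<noteq> (x = WA u + Suc x0 \<and> y = Suc (WB u + y0)))))"
  proof (cases "x < WA u + Suc x0")
    case True
    show ?thesis
    proof (cases "y \<le> WB u + y0")
      case True
      then show ?thesis using \<open>x < WA u + Suc x0\<close> inC_end[of u] assms unfolding W W' by (auto dest: inC_u_le)
    next
      case False
      then show ?thesis using \<open>x < WA u + Suc x0\<close> inC_end[of u] assms unfolding W W' by (auto dest: inC_u_le)
    qed
  next
    case False
    define a where "a = x - (WA u + Suc x0)"
    have xa: "x = WA u + Suc x0 + a" using False by (simp add: a_def)
    show ?thesis
    proof (cases "y \<le> WB u + y0")
      case True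
      then show ?thesis using xa inC_end[of u] assms unfolding W' by (auto dest: inC_u_le)
    next
      case False
      define b where "b = y - Suc (WB u + y0)"
      have yb: "y = Suc (WB u + y0) + b" using False by (simp add: b_def)
      have e1: "y + (WA u + Suc x0) - (WB u + y0) = WA u + Suc x0 + Suc b" using yb by simp
      have e2: "x + Suc (WB u + y0) - (WA u + Suc x0) = WB u + y0 + Suc a" using xa by simp
      have L: "inC ?w' x y \<longleftrightarrow> (a = 0 \<and> b = 0) \<or> (a = y2 \<and> b = p2) \<or> (y2 \<le> a \<and> p2 \<le> b \<and> inC v (b - p2) (a - y2))"
        unfolding W' xa yb by (auto dest: inC_u_le)
      have R: "inC ?w (WA u + Suc x0 + Suc b) (WB u + y0 + Suc a) \<longleftrightarrow> (a = y2 \<and> b = p2) \<or> (y2 \<le> a \<and> p2 \<le> b \<and> inC v (b - p2) (a - y2))"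
        unfolding W by (auto dest: inC_u_le)
      show ?thesis using False \<open>\<not> x < WA u + Suc x0\<close> assms xa yb unfolding e1 e2 L R by auto
    qed
  qed
qed


lemma inC_single: "inC [(a,b)] x y \<longleftrightarrow> (x = 0 \<and> y = 0) \<or> (x = a \<and> y = b)"
  by auto

lemma cycle_E_iff: "cycle_E L i j \<longleftrightarrow> i < L \<and> j < L \<and>
   (j = Suc i \<or> i = Suc j \<or> (i = 0 \<and> Suc j = L) \<or> (j = 0 \<and> Suc i = L))"
  unfolding cycle_E_def
  by (cases "Suc i = L"; cases "Suc j = L") (auto simp: mod_if)

lemma single_cycle_iso:
  assumes "3 \<le> a + b + 2"
  shows "graph_iso (LV a b) (LE a b (CS [(a,b)])) (cycle_V (a + b + 2)) (cycle_E (a + b + 2))"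
  unfolding graph_iso_def
proof (intro exI conjI)
  let ?L = "a + b + 2"
  define f where "f = (\<lambda>v::vtx. if fst v then a + b + 1 - snd v else snd v)"
  define g where "g = (\<lambda>k::nat. if k \<le> a then (False, k) else (True, a + b + 1 - k))"
  show "bij_betw f (LV a b) (cycle_V ?L)"
    by (rule bij_betw_byWitness[where f'=g]) (auto simp: f_def g_def LV_def cycle_V_def split: if_splits)
  show "\<forall>x\<in>LV a b. \<forall>y\<in>LV a b. LE a b (CS [(a,b)]) x y \<longleftrightarrow> cycle_E ?L (f x) (f y)"
  proof (intro ballI)
    fix x y assume x: "x \<in> LV a b" and y: "y \<in> LV a b"
    obtain bx p where xa: "x = (bx, p)" by fastforce
    obtain by' q where yb: "y = (by', q)" by fastforce
    show "LE a b (CS [(a,b)]) x y \<longleftrightarrow> cycle_E ?L (f x) (f y)"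
      using x y assms unfolding xa yb cycle_E_iff
      by (cases bx; cases by') (auto simp: f_def CS_def)
  qed
qed

lemma window:
  assumes "(a,b) \<in> set w"
  shows "vmw w [(a,b)]"
proof -
  obtain u v where w: "w = u @ (a,b) # v" using assms by (metis split_list)
  let ?a0 = "WA u" and ?b0 = "WB u"
  define U where "U = {(False, x) | x. ?a0 \<le> x \<and> x \<le> ?a0 + a} \<union> {(True, y) | y. ?b0 \<le> y \<and> y \<le> ?b0 + b}"
  define f where "f = (\<lambda>v::vtx. if fst v then (True, snd v - ?b0) else (False, snd v - ?a0))"
  define g where "g = (\<lambda>v::vtx. if fst v then (True, snd v + ?b0) else (False, snd v + ?a0))"
  have W: "inC w x y \<longleftrightarrow> inC u x y \<or> (x = WA u \<and> y = WB u) \<or> (x = WA u + a \<and> y = WB u + b)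
     \<or> (WA u + a \<le> x \<and> WB u + b \<le> y \<and> inC v (x - (WA u + a)) (y - (WB u + b)))" for x y
    unfolding w using inC_app3[of u "[(a,b)]" v x y] by simp
  have box: "?a0 \<le> x \<Longrightarrow> x \<le> ?a0 + a \<Longrightarrow> ?b0 \<le> y \<Longrightarrow> y \<le> ?b0 + b \<Longrightarrow>
      inC w x y \<longleftrightarrow> (x = ?a0 \<and> y = ?b0) \<or> (x = ?a0 + a \<and> y = ?b0 + b)" for x y
    unfolding W using inC_end[of u] by (auto dest: inC_u_le inC_le)
  show ?thesis unfolding vmw_def
  proof (rule vm_by_induced)
    show "U \<subseteq> LV (WA w) (WB w)" by (auto simp: U_def w)
    show "bij_betw f U (LV (WA [(a,b)]) (WB [(a,b)]))"
      by (rule bij_betw_byWitness[where f'=g]) (auto simp: f_def g_def U_def LV_def)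
    fix x y assume x: "x \<in> U" and y: "y \<in> U"
    obtain bx p where xa: "x = (bx, p)" by fastforce
    obtain by' q where yb: "y = (by', q)" by fastforce
    show "LE (WA w) (WB w) (CS w) x y \<longleftrightarrow> LE (WA [(a,b)]) (WB [(a,b)]) (CS [(a,b)]) (f x) (f y)"
    proof (cases bx; cases by')
      assume "\<not> bx" "\<not> by'" then show ?thesis using x y unfolding xa yb by (auto simp: U_def f_def w)
    next
      assume "bx" "by'" then show ?thesis using x y unfolding xa yb by (auto simp: U_def f_def w)
    next
      assume "\<not> bx" "by'" then show ?thesis using x y box[of p q] unfolding xa yb by (auto simp: U_def f_def w CS_def)
    next
      assume "bx" "\<not> by'" then show ?thesis using x y box[of q p] unfolding xa yb by (auto simp: U_def f_def w CS_def)
    qed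
  qed
qed

lemma vmw_refl: "vmw w w"
  unfolding vmw_def by (rule has_vertex_minor_iso) (auto simp: graph_iso_def intro!: exI[of _ id])

lemma w_contractQ: "vmw (u @ (x1, Suc (Suc p)) # v) (u @ (x1, Suc p) # v)"
proof (rule vmw_swap)
  show "vmw (map prod.swap (u @ (x1, Suc (Suc p)) # v)) (map prod.swap (u @ (x1, Suc p) # v))"
    using w_contract[of "map prod.swap u" p x1 "map prod.swap v"] by simp
qed

lemma shrinkP: "1 \<le> a' \<Longrightarrow> a' \<le> a \<Longrightarrow> vmw [(a,b)] [(a',b)]"
proof (induction a)
  case 0 then show ?case by simp
next
  case (Suc a)
  show ?case
  proof (cases "a' = Suc a")
    case True then show ?thesis by (simp add: vmw_refl)
  next
    case False
    then have "1 \<le> a'" "a' \<le> a" using Suc.prems by auto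
    then have h: "vmw [(a,b)] [(a',b)]" by (rule Suc.IH)
    obtain p where a: "a = Suc p" using \<open>1 \<le> a'\<close> \<open>a' \<le> a\<close> by (cases a) auto
    have "vmw [(Suc a,b)] [(a,b)]" using w_contract[of "[]" p b "[]"] a by simp
    then show ?thesis using h by (rule vmw_trans)
  qed
qed

lemma shrinkQ: "1 \<le> b' \<Longrightarrow> b' \<le> b \<Longrightarrow> vmw [(a,b)] [(a,b')]"
proof (induction b)
  case 0 then show ?case by simp
next
  case (Suc b)
  show ?case
  proof (cases "b' = Suc b")
    case True then show ?thesis by (simp add: vmw_refl)
  next
    case False
    then have "1 \<le> b'" "b' \<le> b" using Suc.prems by auto
    then have h: "vmw [(a,b)] [(a,b')]" by (rule Suc.IH)
    obtain p where b: "b = Suc p" using \<open>1 \<le> b'\<close> \<open>b' \<le> b\<close> by (cases b) auto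
    have "vmw [(a,Suc b)] [(a,b)]" using w_contractQ[of "[]" a p "[]"] b by simp
    then show ?thesis using h by (rule vmw_trans)
  qed
qed

definition Gw :: "(nat \<times> nat) list \<Rightarrow> nat \<Rightarrow> bool" where
  "Gw w m \<longleftrightarrow> has_vertex_minor (LV (WA w) (WB w)) (LE (WA w) (WB w) (CS w)) (cycle_V m) (cycle_E m)"

lemma Gw_vmw: "vmw w w' \<Longrightarrow> Gw w' m \<Longrightarrow> Gw w m"
  unfolding Gw_def vmw_def by (rule has_vertex_minor_trans)

lemma Gw_single: "3 \<le> a + b + 2 \<Longrightarrow> Gw [(a,b)] (a + b + 2)"
  unfolding Gw_def using has_vertex_minor_iso[OF single_cycle_iso[of a b]] by simp

lemma long_face:
  assumes "(a,b) \<in> set w" "m \<le> a + b + 2" "4 \<le> m"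
  shows "Gw w m"
proof -
  have "\<exists>a' b'. vmw [(a,b)] [(a',b')] \<and> a' + b' + 2 = m"
  proof (cases "m - 3 \<le> a")
    case True
    show ?thesis
    proof (cases "b = 0")
      case True
      then have "vmw [(a,b)] [(m-2,b)]" using shrinkP[of "m-2" a b] assms \<open>m - 3 \<le> a\<close> by simp
      then show ?thesis using True assms by (intro exI[of _ "m-2"] exI[of _ b]) auto
    next
      case False
      have 1: "vmw [(a,b)] [(m-3,b)]" using shrinkP[of "m-3" a b] assms \<open>m - 3 \<le> a\<close> by simp
      have 2: "vmw [(m-3,b)] [(m-3,1)]" using shrinkQ[of 1 b "m-3"] False by simp
      show ?thesis using vmw_trans[OF 1 2] assms by (intro exI[of _ "m-3"] exI[of _ 1]) auto
    qed
  next
    case False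
    then have "vmw [(a,b)] [(a, m - 2 - a)]" using shrinkQ[of "m - 2 - a" b a] assms by simp
    then show ?thesis using False assms by (intro exI[of _ a] exI[of _ "m - 2 - a"]) auto
  qed
  then obtain a' b' where h: "vmw [(a,b)] [(a',b')]" "a' + b' + 2 = m" by blast
  have "Gw [(a',b')] m" using Gw_single[of a' b'] h(2) assms(3) by simp
  then have "Gw [(a,b)] m" using h(1) Gw_vmw by blast
  then show ?thesis using window[OF assms(1)] Gw_vmw by blast
qed


definition valid :: "(nat \<times> nat) list \<Rightarrow> bool" where
  "valid w \<longleftrightarrow> (\<forall>s \<in> set w. s \<noteq> (0,0))"

definition sz :: "nat \<times> nat \<Rightarrow> nat" where
  "sz s = fst s + snd s + 2"

definition longw :: "(nat \<times> nat) list \<Rightarrow> nat \<Rightarrow> bool" where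
  "longw w m \<longleftrightarrow> (\<exists>s \<in> set w. m \<le> sz s)"

definition NV :: "(nat \<times> nat) list \<Rightarrow> nat" where
  "NV w = WA w + WB w"

definition KA :: "nat \<Rightarrow> nat" where
  "KA m = 2*m*m + 5*m + 1"

definition kap2E :: "nat \<Rightarrow> nat \<times> nat \<Rightarrow> nat \<times> nat \<Rightarrow> nat \<times> nat \<Rightarrow> nat" where
  "kap2E m s2 s3 s4 =
    (if 1 \<le> fst s2 then 0
     else if 1 \<le> fst s3 then snd s2 - 1
     else if s3 = (0,1) \<and> snd s4 = 0 then m + (snd s2 - 1) + (fst s4 - 1) + 1
     else 4*m + 2*m*(m - (snd s2 + 2)) + (snd s3 - 1))"

fun kap :: "nat \<Rightarrow> (nat \<times> nat) list \<Rightarrow> nat" where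
  "kap m (F # s1 # s2 # s3 # s4 # r) = KA m * (sz s1 - 3) +
     (if s1 = (1,0) then kap2E m s2 s3 s4
      else if s1 = (0,1) then kap2E m (prod.swap s2) (prod.swap s3) (prod.swap s4) else 0)"
| "kap m _ = 0"

definition Post :: "nat \<Rightarrow> (nat \<times> nat) list \<Rightarrow> (nat \<times> nat) list \<Rightarrow> bool" where
  "Post m w w' \<longleftrightarrow> w' \<noteq> [] \<and> vmw w w' \<and> valid w' \<and> Suc (NV w') = NV w \<and> sz (hd w) \<le> sz (hd w') \<and>
     (\<not> longw w' m \<longrightarrow> sz (hd w) < sz (hd w') \<or> kap m w' < kap m w)"

lemma valid_simps[simp]: "valid [] " "valid (s # w) \<longleftrightarrow> s \<noteq> (0,0) \<and> valid w"
  "valid (u @ v) \<longleftrightarrow> valid u \<and> valid v"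
  by (auto simp: valid_def)

lemma valid_swap[simp]: "valid (map prod.swap w) \<longleftrightarrow> valid w"
  by (auto simp: valid_def)

lemma longw_simps[simp]: "longw [] m = False" "longw (s # w) m \<longleftrightarrow> m \<le> sz s \<or> longw w m"
  "longw (u @ v) m \<longleftrightarrow> longw u m \<or> longw v m"
  by (auto simp: longw_def)

lemma sz_swap[simp]: "sz (prod.swap s) = sz s" by (simp add: sz_def)

lemma longw_swap[simp]: "longw (map prod.swap w) m \<longleftrightarrow> longw w m"
  by (auto simp: longw_def)

lemma NV_swap[simp]: "NV (map prod.swap w) = NV w" by (simp add: NV_def)

lemma map_swap_swap[simp]: "map prod.swap (map prod.swap w) = w"
  by (induction w) auto

lemma kap_swap: "kap m (map prod.swap w) = kap m w"
proof (cases "(m,w)" rule: kap.cases)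
  case (1 m' F s1 s2 s3 s4 r)
  then show ?thesis by (cases s1; cases s2; cases s3; cases s4) (auto simp: sz_def)
qed auto

lemma Post_swap:
  assumes "Post m (map prod.swap w) w''" "w \<noteq> []"
  shows "Post m w (map prod.swap w'')"
proof -
  have ne: "w'' \<noteq> []" using assms(1) by (simp add: Post_def)
  have v0: "vmw (map prod.swap w) w''" using assms(1) by (simp add: Post_def)
  have v: "vmw w (map prod.swap w'')" by (rule vmw_swap) (simp add: v0)
  have h1: "hd (map prod.swap w'') = prod.swap (hd w'')" using ne by (simp add: hd_map)
  have h2: "hd (map prod.swap w) = prod.swap (hd w)" using assms(2) by (simp add: hd_map)
  have P: "valid w''" "Suc (NV w'') = NV w" "sz (hd w) \<le> sz (hd w'')"
     "\<not> longw w'' m \<longrightarrow> sz (hd w) < sz (hd w'') \<or> kap m w'' < kap m w"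
    using assms(1) unfolding Post_def h2 sz_swap kap_swap by auto
  show ?thesis unfolding Post_def h1 sz_swap longw_swap kap_swap NV_swap valid_swap using ne v P by auto
qed

lemma vmw_swapI: "vmw (map prod.swap w) (map prod.swap w') \<Longrightarrow> vmw w w'" by (rule vmw_swap)

lemma w_op1q_EE:
  assumes "(x0,y0) \<noteq> (0,0)" "(x3,y3) \<noteq> (0,0)"
  shows "vmw (u @ (x0,y0) # (0,1) # (0,1) # (x3,y3) # v) (u @ (x0 + x3, Suc (y0 + y3)) # v)"
proof -
  have h: "(y0,x0) \<noteq> (0,0)" "(y3,x3) \<noteq> (0,0)" using assms by auto
  show ?thesis by (rule vmw_swapI) (use w_op1p_EE[OF h, of "map prod.swap u" "map prod.swap v"] in simp)
qed

lemma w_op1q_EN: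
  assumes "(x0,y0) \<noteq> (0,0)" "(x2, Suc p2) \<noteq> (0,1)"
  shows "vmw (u @ (x0,y0) # (0,1) # (x2, Suc p2) # v) (u @ (x0, Suc y0) # (x2, p2) # v)"
proof -
  have h: "(y0,x0) \<noteq> (0,0)" "(Suc p2,x2) \<noteq> (1,0)" using assms by auto
  show ?thesis by (rule vmw_swapI) (use w_op1p_EN[OF h, of "map prod.swap u" "map prod.swap v"] in simp)
qed

lemma w_op1q_NE:
  assumes "(x1, Suc p1) \<noteq> (0,1)" "(x3,y3) \<noteq> (0,0)"
  shows "vmw (u @ (x1, Suc p1) # (0,1) # (x3,y3) # v) (u @ (x1, p1) # (x3, Suc y3) # v)"
proof -
  have h: "(Suc p1,x1) \<noteq> (1,0)" "(y3,x3) \<noteq> (0,0)" using assms by auto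
  show ?thesis by (rule vmw_swapI) (use w_op1p_NE[OF h, of "map prod.swap u" "map prod.swap v"] in simp)
qed

lemma w_op1q_NN:
  assumes "(x1, Suc p1) \<noteq> (0,1)" "(x2, Suc p2) \<noteq> (0,1)"
  shows "vmw (u @ (x1, Suc p1) # (x2, Suc p2) # v) (u @ (x1, p1) # (0,1) # (x2, p2) # v)"
proof -
  have h: "(Suc p1,x1) \<noteq> (1,0)" "(Suc p2,x2) \<noteq> (1,0)" using assms by auto
  show ?thesis by (rule vmw_swapI) (use w_op1p_NN[OF h, of "map prod.swap u" "map prod.swap v"] in simp)
qed

lemma w_twistq_EE:
  assumes "(x0,y0) \<noteq> (0,0)" "(x3,y3) \<noteq> (0,0)"
  shows "vmw (u @ (x0,y0) # (0,1) # (1,0) # (0,1) # (x3,y3) # v) (u @ (Suc x0, y0) # (y3, Suc x3) # map prod.swap v)"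
proof -
  have h: "(y0,x0) \<noteq> (0,0)" "(y3,x3) \<noteq> (0,0)" using assms by auto
  show ?thesis by (rule vmw_swapI) (use w_twist_EE[OF h, of "map prod.swap u" "map prod.swap v"] in simp)
qed

lemma w_twistq_EN:
  assumes "(x0,y0) \<noteq> (0,0)" "(x2, Suc p2) \<noteq> (0,1)"
  shows "vmw (u @ (x0,y0) # (0,1) # (1,0) # (x2, Suc p2) # v) (u @ (Suc x0, y0) # (0,1) # (p2, x2) # map prod.swap v)"
proof -
  have h: "(y0,x0) \<noteq> (0,0)" "(Suc p2,x2) \<noteq> (1,0)" using assms by auto
  show ?thesis by (rule vmw_swapI) (use w_twist_EN[OF h, of "map prod.swap u" "map prod.swap v"] in simp)
qed

lemma kap2E_bound:
  assumes "sz s2 < m" "sz s3 < m" "sz s4 < m"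
  shows "kap2E m s2 s3 s4 < KA m"
proof -
  have a: "2*m*(m - (snd s2 + 2)) \<le> 2*m*m" by (rule mult_le_mono2) simp
  have b: "snd s3 \<le> m" "snd s2 \<le> m" "fst s4 \<le> m" "3 \<le> m" using assms by (auto simp: sz_def)
  have c: "4*m + 2*m*(m - (snd s2 + 2)) + (snd s3 - 1) < KA m"
    using a b unfolding KA_def by linarith
  have d1: "m + (snd s2 - 1) + (fst s4 - 1) + 1 < KA m" using b unfolding KA_def by linarith
  have d2: "snd s2 - 1 < KA m" using b unfolding KA_def by linarith
  have d3: "0 < KA m" unfolding KA_def by linarith
  note d = d1 d2 d3
  have "kap2E m s2 s3 s4 = 0 \<or> kap2E m s2 s3 s4 = snd s2 - 1 \<or>
        kap2E m s2 s3 s4 = m + (snd s2 - 1) + (fst s4 - 1) + 1 \<or>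
        kap2E m s2 s3 s4 = 4*m + 2*m*(m - (snd s2 + 2)) + (snd s3 - 1)"
    unfolding kap2E_def by auto
  then show ?thesis using c d1 d2 d3 by metis
qed

lemma kap_bound:
  assumes "\<not> longw w m" "4 \<le> m"
  shows "kap m w < KA m * m"
proof (cases "(m,w)" rule: kap.cases)
  case (1 m' F s1 s2 s3 s4 r)
  then have 1: "w = F # s1 # s2 # s3 # s4 # r" by simp
  have s: "sz s1 < m" "sz s2 < m" "sz s3 < m" "sz s4 < m"
    using assms unfolding 1 by (auto simp: not_le)
  have k2: "kap2E m s2 s3 s4 < KA m" "kap2E m (prod.swap s2) (prod.swap s3) (prod.swap s4) < KA m"
    using kap2E_bound s by auto
  have x: "(if s1 = (1,0) then kap2E m s2 s3 s4
      else if s1 = (0,1) then kap2E m (prod.swap s2) (prod.swap s3) (prod.swap s4) else 0) < KA m"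
    using k2 by (auto simp: KA_def)
  have "sz s1 - 3 \<le> m - 1" using s(1) by arith
  then have y: "KA m * (sz s1 - 3) \<le> KA m * (m - 1)" by (rule mult_le_mono2)
  have z: "KA m * (m - 1) + KA m = KA m * m" using s(1)
    by (cases m) (auto simp: algebra_simps)
  have "kap m w = KA m * (sz s1 - 3) + (if s1 = (1,0) then kap2E m s2 s3 s4
      else if s1 = (0,1) then kap2E m (prod.swap s2) (prod.swap s3) (prod.swap s4) else 0)"
    unfolding 1 by simp
  then show ?thesis using x y z by linarith
qed (use assms in \<open>auto simp: KA_def\<close>)

lemma arith_2m:
  fixes m S S' :: nat
  assumes "S + 1 \<le> S'" "S' \<le> m"
  shows "2*m*(m - S') + 2*m \<le> 2*m*(m - S)"
proof -
  have "m - S' + 1 \<le> m - S" using assms by arith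
  then have "2*m*(m - S' + 1) \<le> 2*m*(m - S)" by (rule mult_le_mono2)
  then show ?thesis by (simp add: algebra_simps)
qed

lemma PostG:
  assumes "w' \<noteq> []" "vmw w w'" "valid w'" "Suc (NV w') = NV w" "sz (hd w) < sz (hd w')"
  shows "Post m w w'"
  using assms by (simp add: Post_def)

lemma PostK:
  assumes "w' \<noteq> []" "vmw w w'" "valid w'" "Suc (NV w') = NV w" "hd w' = hd w"
    "\<not> longw w' m \<Longrightarrow> kap m w' < kap m w"
  shows "Post m w w'"
  using assms by (simp add: Post_def)


lemma kap2E_le:
  assumes "snd s2 \<le> m" "sz s3 < m" "sz s4 < m"
  shows "kap2E m s2 s3 s4 \<le> 5*m + 2*m*(m - (snd s2 + 2))"
proof -
  have b: "snd s3 \<le> m" "fst s4 \<le> m" "3 \<le> m" using assms by (auto simp: sz_def)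
  have "kap2E m s2 s3 s4 = 0 \<or> kap2E m s2 s3 s4 = snd s2 - 1 \<or>
        kap2E m s2 s3 s4 = m + (snd s2 - 1) + (fst s4 - 1) + 1 \<or>
        kap2E m s2 s3 s4 = 4*m + 2*m*(m - (snd s2 + 2)) + (snd s3 - 1)"
    unfolding kap2E_def by auto
  moreover have "0 \<le> 5*m + 2*m*(m - (snd s2 + 2))" by simp
  moreover have "snd s2 - 1 \<le> 5*m + 2*m*(m - (snd s2 + 2))" using assms(1) by linarith
  moreover have "m + (snd s2 - 1) + (fst s4 - 1) + 1 \<le> 5*m + 2*m*(m - (snd s2 + 2))" using assms(1) b by linarith
  moreover have "4*m + 2*m*(m - (snd s2 + 2)) + (snd s3 - 1) \<le> 5*m + 2*m*(m - (snd s2 + 2))" using b by linarith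
  ultimately show ?thesis by metis
qed

lemma stepE:
  fixes m f1 f2 a2 b2 a3 b3 a4 b4 a5 b5 a6 b6 a7 b7 a8 b8 :: nat and r :: "(nat \<times> nat) list"
  defines "w \<equiv> (f1,f2) # (1,0) # (a2,b2) # (a3,b3) # (a4,b4) # (a5,b5) # (a6,b6) # (a7,b7) # (a8,b8) # r"
  assumes val: "valid w" and nl: "\<not> longw w m" and m4: "4 \<le> m"
  shows "\<exists>w'. Post m w w'"
proof -
  have nz: "(f1,f2) \<noteq> (0,0)" "(a2,b2) \<noteq> (0,0)" "(a3,b3) \<noteq> (0,0)" "(a4,b4) \<noteq> (0,0)"
    "(a5,b5) \<noteq> (0,0)" "(a6,b6) \<noteq> (0,0)" "(a7,b7) \<noteq> (0,0)" "(a8,b8) \<noteq> (0,0)" "valid r"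
    using val by (auto simp: w_def)
  have szw: "a2 + b2 + 2 < m" "a3 + b3 + 2 < m" "a4 + b4 + 2 < m" "a5 + b5 + 2 < m" "a6 + b6 + 2 < m"
    using nl by (auto simp: w_def sz_def not_le)
  have kw: "kap m w = kap2E m (a2,b2) (a3,b3) (a4,b4)" by (simp add: w_def sz_def)
  show ?thesis
  proof (cases "1 \<le> a2")
    case True
    then obtain p2 where a2: "a2 = Suc p2" by (cases a2) auto
    show ?thesis
    proof (cases "(a2,b2) = (1,0)")
      case True
      then have e: "a2 = 1" "b2 = 0" by auto
      let ?w' = "(Suc (f1 + a3), f2 + b3) # (a4,b4) # (a5,b5) # (a6,b6) # (a7,b7) # (a8,b8) # r"
      show ?thesis
      proof (rule exI[of _ ?w'], rule PostG)
        show "vmw w ?w'" unfolding w_def e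
          using w_op1p_EE[of f1 f2 a3 b3 "[]" "(a4,b4) # (a5,b5) # (a6,b6) # (a7,b7) # (a8,b8) # r"] nz by simp
        show "Suc (NV ?w') = NV w" by (simp add: w_def NV_def e)
        show "sz (hd w) < sz (hd ?w')" using nz by (auto simp: w_def sz_def)
      qed (use nz in simp_all)
    next
      case False
      let ?w' = "(Suc f1, f2) # (p2, b2) # (a3,b3) # (a4,b4) # (a5,b5) # (a6,b6) # (a7,b7) # (a8,b8) # r"
      show ?thesis
      proof (rule exI[of _ ?w'], rule PostG)
        show "vmw w ?w'" unfolding w_def a2
          using w_op1p_EN[of f1 f2 p2 b2 "[]" "(a3,b3) # (a4,b4) # (a5,b5) # (a6,b6) # (a7,b7) # (a8,b8) # r"] nz False a2 by simp
        show "Suc (NV ?w') = NV w" by (simp add: w_def NV_def a2)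
        show "sz (hd w) < sz (hd ?w')" by (auto simp: w_def sz_def)
      qed (use nz False a2 in simp_all)
    qed
  next
    case False
    then have a2: "a2 = 0" by simp
    then have b2: "1 \<le> b2" using nz(2) by (cases b2) auto
    show ?thesis
    proof (cases "1 \<le> a3")
      case True
      then obtain p3 where a3: "a3 = Suc p3" by (cases a3) auto
      show ?thesis
      proof (cases "2 \<le> b2")
        case True
        then obtain q where b2q: "b2 = Suc (Suc q)" by (metis add_2_eq_Suc le_Suc_ex)
        let ?w' = "(f1,f2) # (1,0) # (0, Suc q) # (a3,b3) # (a4,b4) # (a5,b5) # (a6,b6) # (a7,b7) # (a8,b8) # r"
        show ?thesis
        proof (rule exI[of _ ?w'], rule PostK)
          show "vmw w ?w'" unfolding w_def a2 b2q
            using w_contractQ[of "[(f1,f2),(1,0)]" 0 q "(a3,b3) # (a4,b4) # (a5,b5) # (a6,b6) # (a7,b7) # (a8,b8) # r"] by simp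
          show "Suc (NV ?w') = NV w" by (simp add: w_def NV_def a2 b2q)
          show "kap m ?w' < kap m w" unfolding kw using a3 b2q a2 by (simp add: sz_def kap2E_def)
        qed (use nz a2 in \<open>simp_all add: w_def\<close>)
      next
        case False
        then have b21: "b2 = 1" using b2 by simp
        show ?thesis
        proof (cases "(a3,b3) = (1,0)")
          case True
          then have e: "a3 = 1" "b3 = 0" by auto
          let ?w' = "(f1, Suc f2) # (Suc b4, a4) # map prod.swap ((a5,b5) # (a6,b6) # (a7,b7) # (a8,b8) # r)"
          show ?thesis
          proof (rule exI[of _ ?w'], rule PostG)
            show "vmw w ?w'" unfolding w_def a2 b21 e
              using w_twist_EE[of f1 f2 a4 b4 "[]" "(a5,b5) # (a6,b6) # (a7,b7) # (a8,b8) # r"] nz by simp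
            show "Suc (NV ?w') = NV w" by (simp add: w_def NV_def a2 b21 e)
            show "sz (hd w) < sz (hd ?w')" by (auto simp: w_def sz_def)
          qed (use nz in auto)
        next
          case False
          let ?w' = "(f1, Suc f2) # (1,0) # (b3, p3) # map prod.swap ((a4,b4) # (a5,b5) # (a6,b6) # (a7,b7) # (a8,b8) # r)"
          show ?thesis
          proof (rule exI[of _ ?w'], rule PostG)
            show "vmw w ?w'" unfolding w_def a2 b21 a3
              using w_twist_EN[of f1 f2 p3 b3 "[]" "(a4,b4) # (a5,b5) # (a6,b6) # (a7,b7) # (a8,b8) # r"] nz False a3 by simp
            show "Suc (NV ?w') = NV w" by (simp add: w_def NV_def a2 b21 a3)
            show "sz (hd w) < sz (hd ?w')" by (auto simp: w_def sz_def)
          qed (use nz False a3 in auto)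
        qed
      qed
    next
      case False
      then have a3: "a3 = 0" by simp
      then have b3: "1 \<le> b3" using nz(3) by (cases b3) auto
      show ?thesis
      proof (cases "2 \<le> b3")
        case True
        then obtain q where b3q: "b3 = Suc (Suc q)" by (metis add_2_eq_Suc le_Suc_ex)
        let ?w' = "(f1,f2) # (1,0) # (0,b2) # (0, Suc q) # (a4,b4) # (a5,b5) # (a6,b6) # (a7,b7) # (a8,b8) # r"
        show ?thesis
        proof (rule exI[of _ ?w'], rule PostK)
          show "vmw w ?w'" unfolding w_def a2 a3 b3q
            using w_contractQ[of "[(f1,f2),(1,0),(0,b2)]" 0 q "(a4,b4) # (a5,b5) # (a6,b6) # (a7,b7) # (a8,b8) # r"] by simp
          show "Suc (NV ?w') = NV w" by (simp add: w_def NV_def a2 a3 b3q)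
          have "b2 \<le> m" "a4 \<le> m" using szw by auto
          then show "kap m ?w' < kap m w" unfolding kw using a2 a3 b3q m4 by (auto simp: sz_def kap2E_def)
        qed (use nz a2 in \<open>simp_all add: w_def\<close>)
      next
        case False
        then have b31: "b3 = 1" using b3 by simp
        show ?thesis
        proof (cases "1 \<le> b4")
          case True
          then obtain p4 where b4: "b4 = Suc p4" by (cases b4) auto
          have kwv: "kap m w = 4*m + 2*m*(m - (b2 + 2))" unfolding kw using a2 a3 b31 b4 by (simp add: kap2E_def)
          show ?thesis
          proof (cases "(a4,b4) = (0,1)")
            case True
            then have e: "a4 = 0" "b4 = 1" by auto
            let ?w' = "(f1,f2) # (1,0) # (a5, Suc (b2 + b5)) # (a6,b6) # (a7,b7) # (a8,b8) # r"
            show ?thesis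
            proof (rule exI[of _ ?w'], rule PostK)
              show "vmw w ?w'" unfolding w_def a2 a3 b31 e
                using w_op1q_EE[of 0 b2 a5 b5 "[(f1,f2),(1,0)]" "(a6,b6) # (a7,b7) # (a8,b8) # r"] nz a2 by simp
              show "Suc (NV ?w') = NV w" by (simp add: w_def NV_def a2 a3 b31 e)
              assume nl': "\<not> longw ?w' m"
              then have s': "b2 + b5 + 3 \<le> m" "sz (a6,b6) < m" "sz (a7,b7) < m" by (auto simp: sz_def)
              have k': "kap m ?w' = kap2E m (a5, Suc (b2 + b5)) (a6,b6) (a7,b7)" by (simp add: sz_def)
              have "kap2E m (a5, Suc (b2 + b5)) (a6,b6) (a7,b7) \<le> 5*m + 2*m*(m - (snd (a5, Suc (b2 + b5)) + 2))"
                by (rule kap2E_le) (use s' in auto)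
              moreover have "2*m*(m - (snd (a5, Suc (b2 + b5)) + 2)) + 2*m \<le> 2*m*(m - (b2 + 2))"
                by (rule arith_2m) (use s' in auto)
              ultimately show "kap m ?w' < kap m w" unfolding k' kwv using m4 by linarith
            qed (use nz a2 in \<open>simp_all add: w_def\<close>)
          next
            case False
            let ?w' = "(f1,f2) # (1,0) # (0, Suc b2) # (a4, p4) # (a5,b5) # (a6,b6) # (a7,b7) # (a8,b8) # r"
            show ?thesis
            proof (rule exI[of _ ?w'], rule PostK)
              show "vmw w ?w'" unfolding w_def a2 a3 b31 b4
                using w_op1q_EN[of 0 b2 a4 p4 "[(f1,f2),(1,0)]" "(a5,b5) # (a6,b6) # (a7,b7) # (a8,b8) # r"] nz a2 False b4 by simp
              show "Suc (NV ?w') = NV w" by (simp add: w_def NV_def a2 a3 b31 b4)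
              assume nl': "\<not> longw ?w' m"
              then have s': "b2 + 3 \<le> m" "sz (a4,p4) < m" "sz (a5,b5) < m" by (auto simp: sz_def)
              have k': "kap m ?w' = kap2E m (0, Suc b2) (a4,p4) (a5,b5)" by (simp add: sz_def)
              have "kap2E m (0, Suc b2) (a4,p4) (a5,b5) \<le> 5*m + 2*m*(m - (snd (0::nat, Suc b2) + 2))"
                by (rule kap2E_le) (use s' in auto)
              moreover have "2*m*(m - (snd (0::nat, Suc b2) + 2)) + 2*m \<le> 2*m*(m - (b2 + 2))"
                by (rule arith_2m) (use s' in auto)
              ultimately show "kap m ?w' < kap m w" unfolding k' kwv using m4 by linarith
            qed (use nz False b4 in \<open>auto simp: w_def\<close>)
          qed
        next
          case False
          then have b40: "b4 = 0" by simp
          then have a4: "1 \<le> a4" using nz(4) by (cases a4) auto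
          have kwv: "kap m w = m + (b2 - 1) + (a4 - 1) + 1" unfolding kw using a2 a3 b31 b40 by (simp add: kap2E_def)
          show ?thesis
          proof (cases "2 \<le> b2")
            case True
            then obtain q where b2q: "b2 = Suc (Suc q)" by (metis add_2_eq_Suc le_Suc_ex)
            let ?w' = "(f1,f2) # (1,0) # (0, Suc q) # (0,1) # (a4,0) # (a5,b5) # (a6,b6) # (a7,b7) # (a8,b8) # r"
            show ?thesis
            proof (rule exI[of _ ?w'], rule PostK)
              show "vmw w ?w'" unfolding w_def a2 a3 b31 b40 b2q
                using w_contractQ[of "[(f1,f2),(1,0)]" 0 q "(0,1) # (a4,0) # (a5,b5) # (a6,b6) # (a7,b7) # (a8,b8) # r"] by simp
              show "Suc (NV ?w') = NV w" by (simp add: w_def NV_def a2 a3 b31 b40 b2q)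
              show "kap m ?w' < kap m w" unfolding kwv b2q by (simp add: sz_def kap2E_def)
            qed (use nz a2 a4 in \<open>simp_all add: w_def\<close>)
          next
            case False
            then have b21: "b2 = 1" using b2 by simp
            show ?thesis
            proof (cases "2 \<le> a4")
              case True
              then obtain q where a4q: "a4 = Suc (Suc q)" by (metis add_2_eq_Suc le_Suc_ex)
              let ?w' = "(f1,f2) # (1,0) # (0, 1) # (0,1) # (Suc q,0) # (a5,b5) # (a6,b6) # (a7,b7) # (a8,b8) # r"
              show ?thesis
              proof (rule exI[of _ ?w'], rule PostK)
                show "vmw w ?w'" unfolding w_def a2 a3 b31 b40 b21 a4q
                  using w_contract[of "[(f1,f2),(1,0),(0,1),(0,1)]" q 0 "(a5,b5) # (a6,b6) # (a7,b7) # (a8,b8) # r"] by simp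
                show "Suc (NV ?w') = NV w" by (simp add: w_def NV_def a2 a3 b31 b40 b21 a4q)
                show "kap m ?w' < kap m w" unfolding kwv a4q b21 by (simp add: sz_def kap2E_def)
              qed (use nz in \<open>simp_all add: w_def\<close>)
            next
              case False
              then have a41: "a4 = 1" using a4 by simp
              show ?thesis
              proof (cases "1 \<le> a5")
                case True
                then obtain p5 where a5: "a5 = Suc p5" by (cases a5) auto
                show ?thesis
                proof (cases "(a5,b5) = (1,0)")
                  case True
                  then have e: "a5 = 1" "b5 = 0" by auto
                  let ?w' = "(f1,f2) # (1,0) # (0,1) # (Suc a6, Suc b6) # (a7,b7) # (a8,b8) # r"
                  show ?thesis
                  proof (rule exI[of _ ?w'], rule PostK)
                    show "vmw w ?w'" unfolding w_def a2 a3 b31 b40 b21 a41 e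
                      using w_op1p_EE[of 0 1 a6 b6 "[(f1,f2),(1,0),(0,1)]" "(a7,b7) # (a8,b8) # r"] nz by simp
                    show "Suc (NV ?w') = NV w" by (simp add: w_def NV_def a2 a3 b31 b40 b21 a41 e)
                    show "kap m ?w' < kap m w" unfolding kwv by (simp add: sz_def kap2E_def)
                  qed (use nz in \<open>simp_all add: w_def\<close>)
                next
                  case False
                  let ?w' = "(f1,f2) # (1,0) # (0,1) # (1,1) # (p5,b5) # (a6,b6) # (a7,b7) # (a8,b8) # r"
                  show ?thesis
                  proof (rule exI[of _ ?w'], rule PostK)
                    show "vmw w ?w'" unfolding w_def a2 a3 b31 b40 b21 a41 a5
                      using w_op1p_EN[of 0 1 p5 b5 "[(f1,f2),(1,0),(0,1)]" "(a6,b6) # (a7,b7) # (a8,b8) # r"] False a5 by simp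
                    show "Suc (NV ?w') = NV w" by (simp add: w_def NV_def a2 a3 b31 b40 b21 a41 a5)
                    show "kap m ?w' < kap m w" unfolding kwv by (simp add: sz_def kap2E_def)
                  qed (use nz False a5 in \<open>auto simp: w_def\<close>)
                qed
              next
                case False
                then have a50: "a5 = 0" by simp
                then have b5: "1 \<le> b5" using nz(5) by (cases b5) auto
                show ?thesis
                proof (cases "b5 = 1")
                  case True
                  let ?w' = "(f1,f2) # (1,0) # (1,1) # (b6, Suc a6) # map prod.swap ((a7,b7) # (a8,b8) # r)"
                  show ?thesis
                  proof (rule exI[of _ ?w'], rule PostK)
                    show "vmw w ?w'" unfolding w_def a2 a3 b31 b40 b21 a41 a50 True
                      using w_twistq_EE[of 0 1 a6 b6 "[(f1,f2),(1,0)]" "(a7,b7) # (a8,b8) # r"] nz by simp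
                    show "Suc (NV ?w') = NV w" by (simp add: w_def NV_def a2 a3 b31 b40 b21 a41 a50 True)
                    show "kap m ?w' < kap m w" unfolding kwv by (simp add: sz_def kap2E_def)
                  qed (use nz in \<open>auto simp: w_def\<close>)
                next
                  case False
                  then obtain p5 where b5p: "b5 = Suc p5" "1 \<le> p5" using b5 by (cases b5) auto
                  let ?w' = "(f1,f2) # (1,0) # (1,1) # (0,1) # (p5, 0) # map prod.swap ((a6,b6) # (a7,b7) # (a8,b8) # r)"
                  show ?thesis
                  proof (rule exI[of _ ?w'], rule PostK)
                    show "vmw w ?w'" unfolding w_def a2 a3 b31 b40 b21 a41 a50 b5p(1)
                      using w_twistq_EN[of 0 1 0 p5 "[(f1,f2),(1,0)]" "(a6,b6) # (a7,b7) # (a8,b8) # r"] b5p by simp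
                    show "Suc (NV ?w') = NV w" by (simp add: w_def NV_def a2 a3 b31 b40 b21 a41 a50 b5p)
                    show "kap m ?w' < kap m w" unfolding kwv by (simp add: sz_def kap2E_def)
                  qed (use nz b5p in \<open>auto simp: w_def\<close>)
                qed
              qed
            qed
          qed
        qed
      qed
    qed
  qed
qed

lemma stepD:
  fixes m f1 f2 a2 b2 a3 b3 a4 b4 a5 b5 a6 b6 a7 b7 a8 b8 :: nat and r :: "(nat \<times> nat) list"
  defines "w \<equiv> (f1,f2) # (1,1) # (a2,b2) # (a3,b3) # (a4,b4) # (a5,b5) # (a6,b6) # (a7,b7) # (a8,b8) # r"
  assumes val: "valid w" and nl: "\<not> longw w m" and m4: "4 \<le> m"
  shows "\<exists>w'. Post m w w'"
proof -
  have nz: "(f1,f2) \<noteq> (0,0)" "(a2,b2) \<noteq> (0,0)" "(a3,b3) \<noteq> (0,0)" "(a4,b4) \<noteq> (0,0)"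
    "(a5,b5) \<noteq> (0,0)" "(a6,b6) \<noteq> (0,0)" "(a7,b7) \<noteq> (0,0)" "(a8,b8) \<noteq> (0,0)" "valid r"
    using val by (auto simp: w_def)
  have kw: "kap m w = KA m" by (simp add: w_def sz_def)
  have kb: "kap m w' < KA m" if "\<not> longw w' m" "hd w' = (f1,f2)" "sz (hd (tl w')) = 3" for w'
  proof -
    have "kap m w' < KA m * m" using kap_bound[OF that(1) m4] .
    show ?thesis
    proof (cases "(m,w')" rule: kap.cases)
      case (1 m' F s1 s2 s3 s4 rr)
      then have e: "w' = F # s1 # s2 # s3 # s4 # rr" by simp
      have s: "sz s2 < m" "sz s3 < m" "sz s4 < m" using that(1) unfolding e by (auto simp: not_le)
      have "kap2E m s2 s3 s4 < KA m" "kap2E m (prod.swap s2) (prod.swap s3) (prod.swap s4) < KA m"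
        using kap2E_bound s by auto
      then show ?thesis using that(3) unfolding e by simp
    qed (auto simp: KA_def)
  qed
  show ?thesis
  proof (cases "1 \<le> a2")
    case True
    then obtain p2 where a2: "a2 = Suc p2" by (cases a2) auto
    show ?thesis
    proof (cases "(a2,b2) = (1,0)")
      case True
      then have e: "a2 = 1" "b2 = 0" by auto
      let ?w' = "(f1,f2) # (0,1) # (Suc a3, b3) # (a4,b4) # (a5,b5) # (a6,b6) # (a7,b7) # (a8,b8) # r"
      show ?thesis
      proof (rule exI[of _ ?w'], rule PostK)
        show "vmw w ?w'" unfolding w_def e
          using w_op1p_NE[of 0 1 a3 b3 "[(f1,f2)]" "(a4,b4) # (a5,b5) # (a6,b6) # (a7,b7) # (a8,b8) # r"] nz by simp
        show "Suc (NV ?w') = NV w" by (simp add: w_def NV_def e)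
        show "kap m ?w' < kap m w" if "\<not> longw ?w' m" unfolding kw by (rule kb[OF that]) (simp_all add: sz_def)
      qed (use nz in \<open>simp_all add: w_def\<close>)
    next
      case False
      let ?w' = "(f1,f2) # (0,1) # (1,0) # (p2, b2) # (a3,b3) # (a4,b4) # (a5,b5) # (a6,b6) # (a7,b7) # (a8,b8) # r"
      show ?thesis
      proof (rule exI[of _ ?w'], rule PostK)
        show "vmw w ?w'" unfolding w_def a2
          using w_op1p_NN[of 0 1 p2 b2 "[(f1,f2)]" "(a3,b3) # (a4,b4) # (a5,b5) # (a6,b6) # (a7,b7) # (a8,b8) # r"] False a2 by simp
        show "Suc (NV ?w') = NV w" by (simp add: w_def NV_def a2)
        show "kap m ?w' < kap m w" if "\<not> longw ?w' m" unfolding kw by (rule kb[OF that]) (simp_all add: sz_def)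
      qed (use nz False a2 in \<open>auto simp: w_def\<close>)
    qed
  next
    case False
    then have a2: "a2 = 0" by simp
    then obtain p2 where b2: "b2 = Suc p2" using nz(2) by (cases b2) auto
    show ?thesis
    proof (cases "b2 = 1")
      case True
      let ?w' = "(f1,f2) # (1,0) # (a3, Suc b3) # (a4,b4) # (a5,b5) # (a6,b6) # (a7,b7) # (a8,b8) # r"
      show ?thesis
      proof (rule exI[of _ ?w'], rule PostK)
        show "vmw w ?w'" unfolding w_def a2 True
          using w_op1q_NE[of 1 0 a3 b3 "[(f1,f2)]" "(a4,b4) # (a5,b5) # (a6,b6) # (a7,b7) # (a8,b8) # r"] nz by simp
        show "Suc (NV ?w') = NV w" by (simp add: w_def NV_def a2 True)
        show "kap m ?w' < kap m w" if "\<not> longw ?w' m" unfolding kw by (rule kb[OF that]) (simp_all add: sz_def)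
      qed (use nz in \<open>simp_all add: w_def\<close>)
    next
      case False
      let ?w' = "(f1,f2) # (1,0) # (0,1) # (0, p2) # (a3,b3) # (a4,b4) # (a5,b5) # (a6,b6) # (a7,b7) # (a8,b8) # r"
      show ?thesis
      proof (rule exI[of _ ?w'], rule PostK)
        show "vmw w ?w'" unfolding w_def a2 b2
          using w_op1q_NN[of 1 0 0 p2 "[(f1,f2)]" "(a3,b3) # (a4,b4) # (a5,b5) # (a6,b6) # (a7,b7) # (a8,b8) # r"] False b2 by simp
        show "Suc (NV ?w') = NV w" by (simp add: w_def NV_def a2 b2)
        show "kap m ?w' < kap m w" if "\<not> longw ?w' m" unfolding kw by (rule kb[OF that]) (simp_all add: sz_def)
      qed (use nz False b2 in \<open>auto simp: w_def\<close>)
    qed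
  qed
qed

lemma kap_lt_gen:
  assumes "\<not> longw (F # s1 # s2 # s3 # s4 # r) m"
  shows "kap m (F # s1 # s2 # s3 # s4 # r) < KA m * (sz s1 - 3) + KA m"
proof -
  have s: "sz s2 < m" "sz s3 < m" "sz s4 < m" using assms by (auto simp: not_le)
  have "kap2E m s2 s3 s4 < KA m" "kap2E m (prod.swap s2) (prod.swap s3) (prod.swap s4) < KA m"
    using kap2E_bound s by auto
  then show ?thesis by (auto simp: KA_def)
qed

lemma stepC:
  fixes m f1 f2 a1 b1 a2 b2 a3 b3 a4 b4 a5 b5 a6 b6 a7 b7 a8 b8 :: nat and r :: "(nat \<times> nat) list"
  defines "w \<equiv> (f1,f2) # (a1,b1) # (a2,b2) # (a3,b3) # (a4,b4) # (a5,b5) # (a6,b6) # (a7,b7) # (a8,b8) # r"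
  assumes val: "valid w" and nl: "\<not> longw w m" and m4: "4 \<le> m"
    and nu: "(a1,b1) \<noteq> (1,0)" "(a1,b1) \<noteq> (0,1)" "(a1,b1) \<noteq> (1,1)"
  shows "\<exists>w'. Post m w w'"
proof -
  have nz: "(f1,f2) \<noteq> (0,0)" "(a1,b1) \<noteq> (0,0)" "valid ((a2,b2) # (a3,b3) # (a4,b4) # (a5,b5) # (a6,b6) # (a7,b7) # (a8,b8) # r)"
    using val by (auto simp: w_def)
  have kw: "kap m w = KA m * (a1 + b1 - 1)" using nu by (auto simp: w_def sz_def)
  let ?v = "(a3,b3) # (a4,b4) # (a5,b5) # (a6,b6) # (a7,b7) # (a8,b8) # r"
  show ?thesis
  proof (cases "2 \<le> a1")
    case True
    then obtain q where a1: "a1 = Suc (Suc q)" by (metis add_2_eq_Suc le_Suc_ex)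
    let ?w' = "(f1,f2) # (Suc q, b1) # (a2,b2) # ?v"
    show ?thesis
    proof (rule exI[of _ ?w'], rule PostK)
      show "vmw w ?w'" unfolding w_def a1 using w_contract[of "[(f1,f2)]" q b1 "(a2,b2) # ?v"] by simp
      show "Suc (NV ?w') = NV w" by (simp add: w_def NV_def a1)
      show "kap m ?w' < kap m w" if "\<not> longw ?w' m"
        using kap_lt_gen[OF that] unfolding kw a1 by (simp add: sz_def algebra_simps)
    qed (use nz in \<open>simp_all add: w_def\<close>)
  next
    case False
    have "2 \<le> b1"
    proof (rule ccontr)
      assume "\<not> 2 \<le> b1" then have "b1 = 0 \<or> b1 = 1" by auto
      moreover have "a1 = 0 \<or> a1 = 1" using False by auto
      ultimately show False using nu nz(2) by auto
    qed
    then obtain q where b1: "b1 = Suc (Suc q)" by (metis add_2_eq_Suc le_Suc_ex)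
    let ?w' = "(f1,f2) # (a1, Suc q) # (a2,b2) # ?v"
    show ?thesis
    proof (rule exI[of _ ?w'], rule PostK)
      show "vmw w ?w'" unfolding w_def b1 using w_contractQ[of "[(f1,f2)]" a1 q "(a2,b2) # ?v"] by simp
      show "Suc (NV ?w') = NV w" by (simp add: w_def NV_def b1)
      show "kap m ?w' < kap m w" if "\<not> longw ?w' m"
        using kap_lt_gen[OF that] unfolding kw b1 by (simp add: sz_def algebra_simps)
    qed (use nz in \<open>simp_all add: w_def\<close>)
  qed
qed


lemma step:
  assumes "valid w" "\<not> longw w m" "4 \<le> m" "9 \<le> length w"
  shows "\<exists>w'. Post m w w'"
proof -
  obtain F s1 s2 s3 s4 s5 s6 s7 s8 r where w: "w = F # s1 # s2 # s3 # s4 # s5 # s6 # s7 # s8 # r"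
    using assms(4)
    by (cases w; cases "tl w"; cases "tl (tl w)"; cases "tl (tl (tl w))"; cases "tl (tl (tl (tl w)))";
        cases "drop 5 w"; cases "drop 6 w"; cases "drop 7 w"; cases "drop 8 w") (auto simp: drop_Suc)
  obtain f1 f2 where F: "F = (f1,f2)" by fastforce
  obtain a1 b1 where 1: "s1 = (a1,b1)" by fastforce
  obtain a2 b2 where 2: "s2 = (a2,b2)" by fastforce
  obtain a3 b3 where 3: "s3 = (a3,b3)" by fastforce
  obtain a4 b4 where 4: "s4 = (a4,b4)" by fastforce
  obtain a5 b5 where 5: "s5 = (a5,b5)" by fastforce
  obtain a6 b6 where 6: "s6 = (a6,b6)" by fastforce
  obtain a7 b7 where 7: "s7 = (a7,b7)" by fastforce
  obtain a8 b8 where 8: "s8 = (a8,b8)" by fastforce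
  note ww = w F 1 2 3 4 5 6 7 8
  consider "(a1,b1) = (1,0)" | "(a1,b1) = (0,1)" | "(a1,b1) = (1,1)"
    | "(a1,b1) \<noteq> (1,0)" "(a1,b1) \<noteq> (0,1)" "(a1,b1) \<noteq> (1,1)" by blast
  then show ?thesis
  proof cases
    case 1
    then have "a1 = 1" "b1 = 0" by auto
    then show ?thesis using stepE[of f1 f2 a2 b2 a3 b3 a4 b4 a5 b5 a6 b6 a7 b7 a8 b8 r m] assms
      unfolding ww by simp
  next
    case 2
    then have e: "a1 = 0" "b1 = 1" by auto
    have "map prod.swap w = (f2,f1) # (1,0) # (b2,a2) # (b3,a3) # (b4,a4) # (b5,a5) # (b6,a6) # (b7,a7) # (b8,a8) # map prod.swap r"
      unfolding ww e by simp
    then have "\<exists>w''. Post m (map prod.swap w) w''"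
      using stepE[of f2 f1 b2 a2 b3 a3 b4 a4 b5 a5 b6 a6 b7 a7 b8 a8 "map prod.swap r" m] assms
      by (metis longw_swap valid_swap)
    then obtain w'' where "Post m (map prod.swap w) w''" by blast
    then have "Post m w (map prod.swap w'')" by (rule Post_swap) (simp add: w)
    then show ?thesis by blast
  next
    case 3
    then have "a1 = 1" "b1 = 1" by auto
    then show ?thesis using stepD[of f1 f2 a2 b2 a3 b3 a4 b4 a5 b5 a6 b6 a7 b7 a8 b8 r m] assms
      unfolding ww by simp
  next
    case 4
    then show ?thesis using stepC[of f1 f2 a1 b1 a2 b2 a3 b3 a4 b4 a5 b5 a6 b6 a7 b7 a8 b8 r m] assms
      unfolding ww by simp
  qed
qed

lemma NV_bound: "\<not> longw w m \<Longrightarrow> NV w \<le> length w * (m - 3)"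
  by (induction w) (auto simp: NV_def sz_def)

lemma main:
  assumes "valid w" "4 \<le> m"
    "longw w m \<or> KA m * m * (m - sz (hd w)) + kap m w + 9 * m \<le> NV w + 2"
  shows "Gw w m"
  using assms
proof (induction "NV w" arbitrary: w rule: less_induct)
  case less
  show ?case
  proof (cases "longw w m")
    case True
    then obtain s where s: "s \<in> set w" "m \<le> sz s" by (auto simp: longw_def)
    obtain a b where "s = (a,b)" by fastforce
    then show ?thesis using long_face[of a b w m] s less.prems by (simp add: sz_def)
  next
    case False
    let ?K = "KA m * m"
    have P: "?K * (m - sz (hd w)) + kap m w + 9 * m \<le> NV w + 2" using less.prems False by simp
    have len: "9 \<le> length w"
    proof (rule ccontr)
      assume "\<not> 9 \<le> length w"
      then have "length w \<le> 8" by simp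
      then have "length w * (m - 3) \<le> 8 * (m - 3)" by simp
      then have "NV w \<le> 8 * (m - 3)" using NV_bound[OF False] by linarith
      then show False using P \<open>4 \<le> m\<close> by linarith
    qed
    obtain w' where Pw: "Post m w w'" using step[OF less.prems(1) False less.prems(2) len] by blast
    have lt: "NV w' < NV w" using Pw by (simp add: Post_def)
    have v': "valid w'" "vmw w w'" "w' \<noteq> []" using Pw by (auto simp: Post_def)
    have "longw w' m \<or> ?K * (m - sz (hd w')) + kap m w' + 9 * m \<le> NV w' + 2"
    proof (cases "longw w' m")
      case False
      have hd': "sz (hd w') < m" using False v'(3) by (auto simp: longw_def not_le)
      have kb: "kap m w' < ?K" using kap_bound[OF False less.prems(2)] .
      have kb0: "kap m w < ?K" using kap_bound[OF \<open>\<not> longw w m\<close> less.prems(2)] .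
      have sz0: "sz (hd w) \<le> sz (hd w')" using Pw by (simp add: Post_def)
      have NVe: "Suc (NV w') = NV w" using Pw by (simp add: Post_def)
      have "sz (hd w) < sz (hd w') \<or> kap m w' < kap m w" using Pw False by (simp add: Post_def)
      then show ?thesis
      proof
        assume g: "sz (hd w) < sz (hd w')"
        have "m - sz (hd w') + 1 \<le> m - sz (hd w)" using g hd' by arith
        then have "?K * (m - sz (hd w') + 1) \<le> ?K * (m - sz (hd w))" by (rule mult_le_mono2)
        then have "?K * (m - sz (hd w')) + ?K \<le> ?K * (m - sz (hd w))" by (simp add: algebra_simps)
        then show ?thesis using P kb NVe by linarith
      next
        assume k: "kap m w' < kap m w"
        have "m - sz (hd w') \<le> m - sz (hd w)" using sz0 by arith
        then have "?K * (m - sz (hd w')) \<le> ?K * (m - sz (hd w))" by (rule mult_le_mono2)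
        then show ?thesis using P k NVe by linarith
      qed
    qed simp
    then have "Gw w' m" using less.hyps[OF lt v'(1) less.prems(2)] by blast
    then show ?thesis using v'(2) Gw_vmw by blast
  qed
qed


lemma graph_iso_sym:
  assumes "graph_iso V1 E1 V2 E2"
  shows "graph_iso V2 E2 V1 E1"
proof -
  obtain f where f: "bij_betw f V1 V2" "\<forall>x\<in>V1. \<forall>y\<in>V1. E1 x y \<longleftrightarrow> E2 (f x) (f y)"
    using assms by (auto simp: graph_iso_def)
  let ?g = "inv_into V1 f"
  have g: "bij_betw ?g V2 V1" using f(1) by (rule bij_betw_inv_into)
  have "\<forall>x\<in>V2. \<forall>y\<in>V2. E2 x y \<longleftrightarrow> E1 (?g x) (?g y)"
  proof (intro ballI)
    fix x y assume "x \<in> V2" "y \<in> V2"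
    then have "?g x \<in> V1" "?g y \<in> V1" "f (?g x) = x" "f (?g y) = y"
      using f(1) g by (auto simp: bij_betw_def inv_into_into f_inv_into_f)
    then show "E2 x y \<longleftrightarrow> E1 (?g x) (?g y)" using f(2) by metis
  qed
  then show ?thesis using g unfolding graph_iso_def by blast
qed

lemma chain_word:
  assumes "finite C" "(0,0) \<in> C" "(A,B) \<in> C" "\<forall>(x,y)\<in>C. x \<le> A \<and> y \<le> B"
    "\<forall>(x,y)\<in>C. \<forall>(x',y')\<in>C. (x \<le> x' \<and> y \<le> y') \<or> (x' \<le> x \<and> y' \<le> y)"
  shows "\<exists>w. valid w \<and> WA w = A \<and> WB w = B \<and> (\<forall>x y. inC w x y \<longleftrightarrow> (x,y) \<in> C)"
  using assms
proof (induction "A + B" arbitrary: A B C rule: less_induct)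
  case less
  show ?case
  proof (cases "A + B = 0")
    case True
    then have "C = {(0,0)}" using less.prems by auto
    then show ?thesis using True by (intro exI[of _ "[]"]) auto
  next
    case False
    define C' where "C' = C - {(A,B)}"
    have fin: "finite C'" "C' \<noteq> {}" using less.prems False by (auto simp: C'_def)
    let ?f = "\<lambda>d::nat\<times>nat. fst d + snd d"
    have "Max (?f ` C') \<in> ?f ` C'" using fin by (intro Max_in) auto
    then obtain c where c0: "c \<in> C'" "?f c = Max (?f ` C')" by auto
    have "\<forall>d\<in>C'. ?f d \<le> ?f c" using fin c0 by auto
    then have c: "c \<in> C'" "\<forall>d\<in>C'. fst d + snd d \<le> fst c + snd c" using c0 by auto
    obtain A' B' where cAB: "c = (A',B')" by fastforce
    have cC: "(A',B') \<in> C" "(A',B') \<noteq> (A,B)" using c cAB by (auto simp: C'_def)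
    have le: "A' \<le> A" "B' \<le> B" using less.prems(4) cC by auto
    have lt: "A' + B' < A + B" using le cC by auto
    have below: "\<forall>(x,y)\<in>C'. x \<le> A' \<and> y \<le> B'"
    proof (intro ballI, clarify)
      fix x y assume xy: "(x,y) \<in> C'"
      then have "(x,y) \<in> C" by (simp add: C'_def)
      then have "(x \<le> A' \<and> y \<le> B') \<or> (A' \<le> x \<and> B' \<le> y)" using less.prems(5) cC by blast
      moreover have "x + y \<le> A' + B'" using c(2) xy cAB by fastforce
      ultimately show "x \<le> A' \<and> y \<le> B'" by auto
    qed
    have "(0,0) \<in> C'" using less.prems False by (auto simp: C'_def)
    moreover have "\<forall>(x,y)\<in>C'. \<forall>(x',y')\<in>C'. (x \<le> x' \<and> y \<le> y') \<or> (x' \<le> x \<and> y' \<le> y)"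
      using less.prems(5) by (auto simp: C'_def)
    ultimately obtain w' where w': "valid w'" "WA w' = A'" "WB w' = B'" "\<forall>x y. inC w' x y \<longleftrightarrow> (x,y) \<in> C'"
      using less.hyps[OF lt fin(1)] c cAB below by auto
    let ?w = "w' @ [(A - A', B - B')]"
    have "valid ?w" using w'(1) le cC by auto
    moreover have "WA ?w = A" "WB ?w = B" using w' le by auto
    moreover have "\<forall>x y. inC ?w x y \<longleftrightarrow> (x,y) \<in> C"
    proof (intro allI)
      fix x y
      have "inC ?w x y \<longleftrightarrow> inC w' x y \<or> (A' \<le> x \<and> B' \<le> y \<and> inC [(A - A', B - B')] (x - A') (y - B'))"
        using inC_append[of w' "[(A - A', B - B')]" x y] w' by simp
      also have "\<dots> \<longleftrightarrow> (x,y) \<in> C' \<or> (x,y) = (A,B)"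
        using w'(4) le below c(1) cAB by auto
      also have "\<dots> \<longleftrightarrow> (x,y) \<in> C" using less.prems(3) by (auto simp: C'_def)
      finally show "inC ?w x y \<longleftrightarrow> (x,y) \<in> C" .
    qed
    ultimately show ?thesis by blast
  qed
qed

lemma ladder_iso:
  assumes L: "gen_ladder_wrt V E P Q"
  defines "C \<equiv> {(i,j). i < length P \<and> j < length Q \<and> E (P!i) (Q!j)}"
  shows "graph_iso (LV (length P - 1) (length Q - 1)) (LE (length P - 1) (length Q - 1) C) V E"
proof -
  let ?a = "length P" and ?b = "length Q"
  have g: "graph V E" "P \<noteq> []" "Q \<noteq> []" "distinct P" "distinct Q" "set P \<inter> set Q = {}" "V = set P \<union> set Q"
    and pe: "\<forall>i. Suc i < ?a \<longrightarrow> E (P ! i) (P ! Suc i)"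
    and qe: "\<forall>j. Suc j < ?b \<longrightarrow> E (Q ! j) (Q ! Suc j)"
    and pn: "\<forall>i<?a. \<forall>i'<?a. E (P ! i) (P ! i') \<longrightarrow> i' = Suc i \<or> i = Suc i'"
    and qn: "\<forall>j<?b. \<forall>j'<?b. E (Q ! j) (Q ! j') \<longrightarrow> j' = Suc j \<or> j = Suc j'"
    using L unfolding gen_ladder_wrt_def by blast+
  have lp: "?a - 1 < ?a" "?b - 1 < ?b" using g by auto
  have sym: "E x y \<Longrightarrow> E y x" for x y using g(1) unfolding graph_def by blast
  define gg where "gg = (\<lambda>v::vtx. if fst v then Q ! snd v else P ! snd v)"
  have bij: "bij_betw gg (LV (?a - 1) (?b - 1)) V"
  proof (rule bij_betw_imageI)
    show "inj_on gg (LV (?a - 1) (?b - 1))"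
    proof (rule inj_onI)
      fix u v assume u: "u \<in> LV (?a - 1) (?b - 1)" and v: "v \<in> LV (?a - 1) (?b - 1)" and e: "gg u = gg v"
      obtain bu x where ux: "u = (bu,x)" by fastforce
      obtain bv y where vy: "v = (bv,y)" by fastforce
      have xr: "if bu then x < ?b else x < ?a" using u lp unfolding ux LV_def by (auto split: if_splits)
      have yr: "if bv then y < ?b else y < ?a" using v lp unfolding vy LV_def by (auto split: if_splits)
      show "u = v"
      proof (cases bu; cases bv)
        assume "bu" "bv" then show ?thesis using e xr yr g(5) unfolding ux vy gg_def by (simp add: nth_eq_iff_index_eq)
      next
        assume "\<not> bu" "\<not> bv" then show ?thesis using e xr yr g(4) unfolding ux vy gg_def by (simp add: nth_eq_iff_index_eq)
      next
        assume "bu" "\<not> bv"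
        then have "Q ! x = P ! y" "x < ?b" "y < ?a" using e xr yr unfolding ux vy gg_def by auto
        then show ?thesis using g(6) by (metis disjoint_iff nth_mem)
      next
        assume "\<not> bu" "bv"
        then have "P ! x = Q ! y" "x < ?a" "y < ?b" using e xr yr unfolding ux vy gg_def by auto
        then show ?thesis using g(6) by (metis disjoint_iff nth_mem)
      qed
    qed
    show "gg ` LV (?a - 1) (?b - 1) = V"
    proof
      show "gg ` LV (?a - 1) (?b - 1) \<subseteq> V"
      proof (rule image_subsetI)
        fix u assume u: "u \<in> LV (?a - 1) (?b - 1)"
        obtain bu x where ux: "u = (bu,x)" by fastforce
        have xr: "if bu then x < ?b else x < ?a" using u lp unfolding ux LV_def by (auto split: if_splits)
        show "gg u \<in> V" using xr g(7) unfolding ux gg_def by (cases bu) auto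
      qed
    next
      show "V \<subseteq> gg ` LV (?a - 1) (?b - 1)"
      proof
        fix v assume "v \<in> V"
        then have "v \<in> set P \<or> v \<in> set Q" using g by auto
        then show "v \<in> gg ` LV (?a - 1) (?b - 1)"
        proof
          assume "v \<in> set P"
          then obtain i where "i < ?a" "v = P ! i" by (auto simp: in_set_conv_nth)
          then show ?thesis by (intro image_eqI[of _ _ "(False,i)"]) (auto simp: gg_def)
        next
          assume "v \<in> set Q"
          then obtain j where "j < ?b" "v = Q ! j" by (auto simp: in_set_conv_nth)
          then show ?thesis by (intro image_eqI[of _ _ "(True,j)"]) (auto simp: gg_def)
        qed
      qed
    qed
  qed
  have adj: "LE (?a - 1) (?b - 1) C u v \<longleftrightarrow> E (gg u) (gg v)" if u: "u \<in> LV (?a - 1) (?b - 1)" and v: "v \<in> LV (?a - 1) (?b - 1)" for u v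
  proof -
    obtain bu x where ux: "u = (bu,x)" by fastforce
    obtain bv y where vy: "v = (bv,y)" by fastforce
    have xr: "if bu then x < ?b else x < ?a" using u lp unfolding ux LV_def by (auto split: if_splits)
    have yr: "if bv then y < ?b else y < ?a" using v lp unfolding vy LV_def by (auto split: if_splits)
    show ?thesis
    proof (cases bu; cases bv)
      assume "bu" "bv"
      then have xy: "x < ?b" "y < ?b" using xr yr by auto
      have "E (Q ! x) (Q ! y) \<longleftrightarrow> (y = Suc x \<or> x = Suc y)"
      proof
        assume "E (Q ! x) (Q ! y)" then show "y = Suc x \<or> x = Suc y" using qn xy by blast
      next
        assume "y = Suc x \<or> x = Suc y"
        then show "E (Q ! x) (Q ! y)"
        proof
          assume "y = Suc x" then show ?thesis using qe xy by auto
        next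
          assume "x = Suc y" then show ?thesis using qe xy sym by auto
        qed
      qed
      then show ?thesis using xy \<open>bu\<close> \<open>bv\<close> unfolding ux vy gg_def by auto
    next
      assume "\<not> bu" "\<not> bv"
      then have xy: "x < ?a" "y < ?a" using xr yr by auto
      have "E (P ! x) (P ! y) \<longleftrightarrow> (y = Suc x \<or> x = Suc y)"
      proof
        assume "E (P ! x) (P ! y)" then show "y = Suc x \<or> x = Suc y" using pn xy by blast
      next
        assume "y = Suc x \<or> x = Suc y"
        then show "E (P ! x) (P ! y)"
        proof
          assume "y = Suc x" then show ?thesis using pe xy by auto
        next
          assume "x = Suc y" then show ?thesis using pe xy sym by auto
        qed
      qed
      then show ?thesis using xy \<open>\<not> bu\<close> \<open>\<not> bv\<close> unfolding ux vy gg_def by auto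
    next
      assume "\<not> bu" "bv"
      then show ?thesis using xr yr unfolding ux vy gg_def C_def by auto
    next
      assume "bu" "\<not> bv"
      then show ?thesis using xr yr sym unfolding ux vy gg_def C_def by auto
    qed
  qed
  show ?thesis unfolding graph_iso_def using bij adj by blast
qed

lemma arith_final:
  fixes n m :: nat
  assumes "2 \<le> n" "m = 4 * n + 3"
  shows "KA m * m * m + KA m * m + 9 * m \<le> 4608 * n ^ 5"
proof -
  have m11: "11 \<le> m" using assms by simp
  have e: "KA m * m * m + KA m * m + 9 * m = 2 * m^4 + 7 * m^3 + 6 * m^2 + 10 * m"
    unfolding KA_def by (simp add: algebra_simps power_def)
  have p3: "11 * m^2 \<le> m^3" using m11 by (simp add: power_def)
  have p4: "11 * m^3 \<le> m^4" using m11 by (simp add: power_def)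
  have p2: "11 * m \<le> m^2" using m11 by (simp add: power_def)
  have "7 * m^3 + 6 * m^2 + 10 * m \<le> m^4" using p2 p3 p4 by linarith
  then have a: "KA m * m * m + KA m * m + 9 * m \<le> 3 * m^4" using e by linarith
  have "m \<le> 6 * n" using assms by simp
  then have "m^4 \<le> (6 * n)^4" by (rule power_mono) simp
  also have "(6 * n)^4 = 1296 * n^4" by (simp add: power_mult_distrib)
  finally have b: "3 * m^4 \<le> 3888 * n^4" by simp
  have "2 * n^4 \<le> n * n^4" using assms(1) by (rule mult_le_mono1)
  moreover have "n * n^4 = n^5" by (simp add: eval_nat_numeral)
  ultimately have "2 * n^4 \<le> n^5" by simp
  then have "3888 * n^4 \<le> 4608 * n^5" by linarith
  then show ?thesis using a b by linarith
qed

theorem proposition4p1: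
  fixes V :: "'a set" and E :: "'a \<Rightarrow> 'a \<Rightarrow> bool" and n :: nat
  assumes "n \<ge> 2"
    and "gen_ladder V E"
    and "card V \<ge> 4608 * n ^ 5"
  shows "has_vertex_minor V E (cycle_V (4 * n + 3)) (cycle_E (4 * n + 3))"
proof -
  obtain P Q where L: "gen_ladder_wrt V E P Q" using assms(2) by (auto simp: gen_ladder_def)
  let ?a = "length P" and ?b = "length Q"
  define C where "C = {(i,j). i < length P \<and> j < length Q \<and> E (P!i) (Q!j)}"
  have g: "P \<noteq> []" "Q \<noteq> []" "distinct P" "distinct Q" "set P \<inter> set Q = {}" "V = set P \<union> set Q"
    "E (hd P) (hd Q)" "E (last P) (last Q)"
    and nc: "\<forall>i<?a. \<forall>i'<?a. \<forall>j<?b. \<forall>j'<?b. E (P ! i) (Q ! j) \<and> E (P ! i') (Q ! j') \<and> i < i' \<longrightarrow> \<not> j > j'"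
    using L unfolding gen_ladder_wrt_def by blast+
  have iso: "graph_iso (LV (?a - 1) (?b - 1)) (LE (?a - 1) (?b - 1) C) V E"
    unfolding C_def by (rule ladder_iso[OF L])
  have finC: "finite C" by (rule finite_subset[of _ "{..<?a} \<times> {..<?b}"]) (auto simp: C_def)
  have c0: "(0,0) \<in> C" using g by (auto simp: C_def hd_conv_nth)
  have c1: "(?a - 1, ?b - 1) \<in> C" using g by (auto simp: C_def last_conv_nth)
  have cb: "\<forall>(x,y)\<in>C. x \<le> ?a - 1 \<and> y \<le> ?b - 1" by (auto simp: C_def)
  have cc: "\<forall>(x,y)\<in>C. \<forall>(x',y')\<in>C. (x \<le> x' \<and> y \<le> y') \<or> (x' \<le> x \<and> y' \<le> y)"
  proof (clarify)
    fix x y x' y' assume h: "(x,y) \<in> C" "(x',y') \<in> C" "\<not> (x' \<le> x \<and> y' \<le> y)"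
    have hx: "x < ?a" "y < ?b" "E (P!x) (Q!y)" "x' < ?a" "y' < ?b" "E (P!x') (Q!y')"
      using h(1,2) by (auto simp: C_def)
    show "x \<le> x' \<and> y \<le> y'"
    proof (cases "x < x'")
      case True then show ?thesis using nc[rule_format, of x x' y y'] hx by auto
    next
      case False
      then have "x' \<le> x" by simp
      show ?thesis
      proof (cases "x' < x")
        case True
        then have "\<not> y' > y" using nc[rule_format, of x' x y' y] hx by auto
        then show ?thesis using h \<open>x' \<le> x\<close> by auto
      next
        case False then show ?thesis using h \<open>x' \<le> x\<close> by auto
      qed
    qed
  qed
  obtain w where w: "valid w" "WA w = ?a - 1" "WB w = ?b - 1" "\<forall>x y. inC w x y \<longleftrightarrow> (x,y) \<in> C"
    using chain_word[OF finC c0 c1 cb cc] by blast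
  have CS: "CS w = C" using w(4) by (auto simp: CS_def)
  have hv1: "has_vertex_minor V E (LV (WA w) (WB w)) (LE (WA w) (WB w) (CS w))"
    using has_vertex_minor_iso[OF graph_iso_sym[OF iso]] w CS by simp
  have cardV: "card V = ?a + ?b"
    using g by (simp add: card_Un_disjoint distinct_card)
  have lp: "1 \<le> ?a" "1 \<le> ?b" using g(1,2) by (auto simp: Suc_le_eq)
  have NVw: "NV w + 2 = card V" using cardV w(2,3) lp unfolding NV_def by linarith
  let ?m = "4 * n + 3"
  have m4: "4 \<le> ?m" using assms(1) by simp
  have "longw w ?m \<or> KA ?m * ?m * (?m - sz (hd w)) + kap ?m w + 9 * ?m \<le> NV w + 2"
  proof (cases "longw w ?m")
    case False
    have k: "kap ?m w < KA ?m * ?m" using kap_bound[OF False m4] .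
    have "KA ?m * ?m * (?m - sz (hd w)) \<le> KA ?m * ?m * ?m" by (rule mult_le_mono2) simp
    then have "KA ?m * ?m * (?m - sz (hd w)) + kap ?m w + 9 * ?m \<le> KA ?m * ?m * ?m + KA ?m * ?m + 9 * ?m"
      using k by linarith
    also have "\<dots> \<le> 4608 * n ^ 5" by (rule arith_final[OF assms(1)]) simp
    finally show ?thesis using assms(3) NVw by linarith
  qed simp
  then have "Gw w ?m" using main[OF w(1) m4] by blast
  then show ?thesis using hv1 unfolding Gw_def by (rule has_vertex_minor_trans[rotated])
qed


end
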